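(* Let $R$ be a ranking profile over $m\geq4$ candidates, let $\rhd$ be the ranking chosen by the Ranked Method of Equal Shares for $R$, and let $\xi=\binom{m-\lfloor m/4\rfloor}{2}$. Then for every subprofile $S$ of $R$ with $|S|>0$: if $\binom{m}{2}|S|-\frac12\leq\xi$, then $\frac{1}{|S|}\sum_{\succ\in\mathcal{R}}S(\succ)u(\succ,\rhd)\geq\binom{m}{2}\frac{|S|}{4}-\frac18$; and if $\binom{m}{2}|S|-\frac12>\xi$, then $$\frac{1}{|S|}\sum_{\succ\in\mathcal{R}}S(\succ)u(\succ,\rhd)\geq\frac12\binom{m}{2}\Big(1-\frac{\xi}{\binom{m}{2}|S|}\Big)+\frac{\xi+1}{4}\cdot\frac{\xi}{\binom{m}{2}|S|}-\frac{1}{4|S|}.$$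
   Context: Let $C$ be a set of $m$ candidates. A ranking is a strict linear order over $C$; $\mathcal{R}$ denotes the set of all rankings over $C$. A ranking profile is a function $R:\mathcal{R}\to[0,1]$ with $\sum_{\succ}R(\succ)=1$. A subprofile of $R$ is $S:\mathcal{R}\to[0,1]$ with $S(\succ)\leq R(\succ)$ for all $\succ$; $|S|=\sum_\succ S(\succ)$. For rankings $\succ,\rhd$, $u(\succ,\rhd)=|\{(x,y)\in C^2:x\succ y\text{ and }x\rhd y\}|$; for $x\in X\subseteq C$, $u(\succ,x,X)=|\{y\in X\setminus\{x\}:x\succ y\}|$. Ranked Method of Equal Shares: set $X_1=C$, $b_1(\succ)=R(\succ)\binom{m}{2}$. In each round $i\in\{1,\dots,m-2\}$, for each $x\in X_i$ let $\rho_x$ be the smallest $\rho\geq0$ with $\sum_{\succ}\min\big(\rho\,b_1(\succ)u(\succ,x,X_i),b_i(\succ),u(\succ,x,X_i)\big)=m-i$ ($\infty$ if none); choose $x_i$ minimizing $\rho_x$ (ties arbitrary), set $\rho_i=\rho_{x_i}$, place $x_i$ at position $i$, set $X_{i+1}=X_i\setminus\{x_i\}$, $b_{i+1}(\succ)=b_i(\succ)-\min(\rho_ib_1(\succ)u(\succ,x_i,X_i),b_i(\succ),u(\succ,x_i,X_i))$. For the last two candidates $x,y$, place $x$ at position $m-1$ if $\sum_{\succ:x\succ y}b_{m-1}(\succ)\geq\sum_{\succ:y\succ x}b_{m-1}(\succ)$, otherwise $y$. *)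

theory Defs
  imports Complex_Main "HOL-Library.Extended_Real"
begin

text \<open>Rankings over a finite candidate set C are the lists enumerating C without
repetition; the first element is the most preferred candidate.\<close>

definition rankings :: "'a set \<Rightarrow> 'a list set" where
  "rankings C = {xs. distinct xs \<and> set xs = C}"

definition prefers :: "'a list \<Rightarrow> 'a \<Rightarrow> 'a \<Rightarrow> bool" where
  "prefers r x y \<longleftrightarrow> (\<exists>i j. i < j \<and> j < length r \<and> r ! i = x \<and> r ! j = y)"

definition agree :: "'a set \<Rightarrow> 'a list \<Rightarrow> 'a list \<Rightarrow> nat" where
  "agree C r s = card {(x, y) \<in> C \<times> C. prefers r x y \<and> prefers s x y}"

definition uX :: "'a list \<Rightarrow> 'a \<Rightarrow> 'a set \<Rightarrow> nat" where
  "uX r x X = card {y \<in> X - {x}. prefers r x y}"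

definition total_pay :: "'a set \<Rightarrow> ('a list \<Rightarrow> real) \<Rightarrow> ('a list \<Rightarrow> real) \<Rightarrow> 'a set \<Rightarrow> 'a \<Rightarrow> real \<Rightarrow> real" where
  "total_pay C b1 b X x \<rho> =
     (\<Sum>r\<in>rankings C. min (\<rho> * b1 r * real (uX r x X)) (min (b r) (real (uX r x X))))"

definition rho :: "'a set \<Rightarrow> ('a list \<Rightarrow> real) \<Rightarrow> ('a list \<Rightarrow> real) \<Rightarrow> 'a set \<Rightarrow> nat \<Rightarrow> 'a \<Rightarrow> ereal" where
  "rho C b1 b X i x =
     (if \<exists>\<rho>::real. \<rho> \<ge> 0 \<and> total_pay C b1 b X x \<rho> = real (card C) - real i
      then ereal (LEAST \<rho>::real. \<rho> \<ge> 0 \<and> total_pay C b1 b X x \<rho> = real (card C) - real i)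
      else \<infinity>)"

definition payment :: "('a list \<Rightarrow> real) \<Rightarrow> ('a list \<Rightarrow> real) \<Rightarrow> 'a set \<Rightarrow> 'a \<Rightarrow> ereal \<Rightarrow> 'a list \<Rightarrow> real" where
  "payment b1 b X x \<rho> r =
     real_of_ereal (min (\<rho> * ereal (b1 r * real (uX r x X))) (ereal (min (b r) (real (uX r x X)))))"

text \<open>rmes_outcome C R rhd: rhd is a ranking that the Ranked Method of Equal Shares can
output on profile R (for some resolution of ties). Position i (1-based) is rhd ! (i - 1).\<close>
definition rmes_outcome :: "'a set \<Rightarrow> ('a list \<Rightarrow> real) \<Rightarrow> 'a list \<Rightarrow> bool" where
  "rmes_outcome C R rhd \<longleftrightarrow>
     rhd \<in> rankings C \<and>
     (\<exists>b :: nat \<Rightarrow> 'a list \<Rightarrow> real.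
        b 1 = (\<lambda>r. R r * real (card C choose 2)) \<and>
        (\<forall>i \<in> {1..card C - 2}.
           (let X = C - set (take (i - 1) rhd); x = rhd ! (i - 1) in
              (\<forall>y\<in>X. rho C (b 1) (b i) X i x \<le> rho C (b 1) (b i) X i y) \<and>
              (\<forall>r\<in>rankings C. b (Suc i) r =
                  b i r - payment (b 1) (b i) X x (rho C (b 1) (b i) X i x) r))) \<and>
        (let x = rhd ! (card C - 2); y = rhd ! (card C - 1) in
           (\<Sum>r\<in>{r\<in>rankings C. prefers r x y}. b (card C - 1) r) \<ge>
           (\<Sum>r\<in>{r\<in>rankings C. prefers r y x}. b (card C - 1) r)))"

end

theory Submission
  imports Defs "HOL-Analysis.Analysis"
begin


definition pos :: "'a list \<Rightarrow> 'a \<Rightarrow> nat" where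
  "pos r x = (THE i. i < length r \<and> r ! i = x)"

lemma pos_nth: "distinct r \<Longrightarrow> i < length r \<Longrightarrow> pos r (r ! i) = i"
  unfolding pos_def by (rule the_equality) (auto simp: nth_eq_iff_index_eq)

lemma pos_in: "distinct r \<Longrightarrow> x \<in> set r \<Longrightarrow> pos r x < length r \<and> r ! pos r x = x"
  by (metis in_set_conv_nth pos_nth)

lemma prefers_pos: "distinct r \<Longrightarrow>
   prefers r x y \<longleftrightarrow> x \<in> set r \<and> y \<in> set r \<and> pos r x < pos r y"
  unfolding prefers_def
  by (metis nth_mem order.strict_trans pos_in pos_nth)

lemma pos_inj: "distinct r \<Longrightarrow> inj_on (pos r) (set r)"
  by (metis inj_onI pos_in)

lemma sum_card_less:
  fixes f :: "'b \<Rightarrow> nat"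
  assumes "finite X" "inj_on f X"
  shows "2 * (\<Sum>x\<in>X. card {y\<in>X. f x < f y}) = card X * (card X - 1)"
  using assms
proof (induction X rule: finite_induct)
  case empty
  then show ?case by simp
next
  case (insert a X)
  have inj: "inj_on f X" using insert by (simp add: inj_on_insert)
  have fa: "\<forall>y\<in>X. f y \<noteq> f a" using insert by (auto simp: inj_on_def)
  have e1: "{y \<in> insert a X. f a < f y} = {y\<in>X. f a < f y}" by auto
  have e2: "\<And>x. x \<in> X \<Longrightarrow> card {y \<in> insert a X. f x < f y} = card {y\<in>X. f x < f y} + (if f x < f a then 1 else 0)"
  proof -
    fix x assume "x \<in> X"
    show "card {y \<in> insert a X. f x < f y} = card {y\<in>X. f x < f y} + (if f x < f a then 1 else 0)"
    proof (cases "f x < f a")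
      case True
      then have "{y \<in> insert a X. f x < f y} = insert a {y\<in>X. f x < f y}" by auto
      then show ?thesis using True insert by simp
    next
      case False
      then have "{y \<in> insert a X. f x < f y} = {y\<in>X. f x < f y}" by auto
      then show ?thesis using False by simp
    qed
  qed
  have "(\<Sum>x\<in>insert a X. card {y\<in>insert a X. f x < f y})
      = card {y\<in>X. f a < f y} + (\<Sum>x\<in>X. card {y\<in>X. f x < f y} + (if f x < f a then 1 else 0))"
    using insert e1 e2 by simp
  also have "\<dots> = card {y\<in>X. f a < f y} + (\<Sum>x\<in>X. card {y\<in>X. f x < f y}) + card {x\<in>X. f x < f a}"
  proof -
    have "card {x\<in>X. f x < f a} = (\<Sum>x\<in>{x\<in>X. f x < f a}. 1)" by simp
    also have "\<dots> = (\<Sum>x\<in>X. if f x < f a then 1 else 0)"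
      by (rule sum.inter_filter) (use insert in simp)
    finally show ?thesis by (simp add: sum.distrib)
  qed
  also have "card {y\<in>X. f a < f y} + card {x\<in>X. f x < f a} = card X"
  proof -
    have "{y\<in>X. f a < f y} \<union> {x\<in>X. f x < f a} = X" using fa by (auto simp: nat_neq_iff)
    moreover have "{y\<in>X. f a < f y} \<inter> {x\<in>X. f x < f a} = {}" by auto
    ultimately show ?thesis using insert
      by (metis (no_types, lifting) card_Un_disjoint finite_Un)
  qed
  then have "card {y\<in>X. f a < f y} + (\<Sum>x\<in>X. card {y\<in>X. f x < f y}) + card {x\<in>X. f x < f a}
       = (\<Sum>x\<in>X. card {y\<in>X. f x < f y}) + card X" by simp
  finally have "2 * (\<Sum>x\<in>insert a X. card {y\<in>insert a X. f x < f y}) = 2 * (\<Sum>x\<in>X. card {y\<in>X. f x < f y}) + 2 * card X"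
    by simp
  also have "\<dots> = card X * (card X - 1) + 2 * card X" using insert.IH[OF inj] by simp
  also have "\<dots> = card (insert a X) * (card (insert a X) - 1)"
    using insert by (cases "card X") (auto simp: algebra_simps)
  finally show ?case .
qed

lemma exists_top:
  fixes f :: "'b \<Rightarrow> nat"
  assumes "finite X" "X \<noteq> {}" "inj_on f X"
  shows "\<exists>t\<in>X. {y\<in>X. f t < f y} = X - {t}"
proof -
  have "Min (f ` X) \<in> f ` X" by (rule Min_in) (use assms in auto)
  then obtain t where t: "t \<in> X" "f t = Min (f ` X)" by auto
  have le: "\<And>y. y \<in> X \<Longrightarrow> f t \<le> f y" using t assms by simp
  have lt: "\<And>y. y \<in> X \<Longrightarrow> y \<noteq> t \<Longrightarrow> f t < f y"
  proof -
    fix y assume y: "y \<in> X" "y \<noteq> t"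
    have "f y \<noteq> f t" using inj_onD[OF assms(3) _ y(1) t(1)] y(2) by blast
    then show "f t < f y" using le[OF y(1)] by simp
  qed
  have "{y\<in>X. f t < f y} = X - {t}" using lt by auto
  then show ?thesis using t by blast
qed

lemma uX_pos:
  assumes "r \<in> rankings C" "X \<subseteq> C" "x \<in> X"
  shows "uX r x X = card {y\<in>X. pos r x < pos r y}"
proof -
  have d: "distinct r" "set r = C" using assms(1) by (auto simp: rankings_def)
  have "{y \<in> X - {x}. prefers r x y} = {y\<in>X. pos r x < pos r y}"
    using assms d by (auto simp: prefers_pos)
  then show ?thesis by (simp add: uX_def)
qed

lemma uX_le:
  assumes "finite X" "x \<in> X"
  shows "uX r x X \<le> card X - 1"
proof -
  have "uX r x X \<le> card (X - {x})" unfolding uX_def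
    by (rule card_mono) (use assms in auto)
  then show ?thesis using assms by simp
qed

lemma uX_top:
  assumes "r \<in> rankings C" "X \<subseteq> C" "finite X" "X \<noteq> {}"
  shows "\<exists>t\<in>X. uX r t X = card X - 1"
proof -
  have d: "distinct r" "set r = C" using assms(1) by (auto simp: rankings_def)
  have inj: "inj_on (pos r) X" using pos_inj[OF d(1)] d assms(2) inj_on_subset by blast
  obtain t where "t \<in> X" "{y\<in>X. pos r t < pos r y} = X - {t}"
    using exists_top[OF assms(3,4) inj] by blast
  moreover have "card (X - {t}) = card X - 1" using \<open>t \<in> X\<close> assms(3) by simp
  ultimately show ?thesis using uX_pos[OF assms(1,2)] by metis
qed

lemma uX_sum:
  assumes "r \<in> rankings C" "X \<subseteq> C" "finite X"
  shows "2 * (\<Sum>x\<in>X. uX r x X) = card X * (card X - 1)"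
proof -
  have d: "distinct r" "set r = C" using assms(1) by (auto simp: rankings_def)
  have inj: "inj_on (pos r) X" using pos_inj[OF d(1)] d assms(2) inj_on_subset by blast
  have "(\<Sum>x\<in>X. uX r x X) = (\<Sum>x\<in>X. card {y\<in>X. pos r x < pos r y})"
    using uX_pos[OF assms(1,2)] by simp
  then show ?thesis using sum_card_less[OF assms(3) inj] by simp
qed

lemma uX_sum_real:
  assumes "r \<in> rankings C" "X \<subseteq> C" "finite X"
  shows "(\<Sum>x\<in>X. real (uX r x X)) = real (card X) * (real (card X) - 1) / 2"
proof -
  have "real (2 * (\<Sum>x\<in>X. uX r x X)) = real (card X * (card X - 1))"
    using uX_sum[OF assms] by simp
  then have "2 * (\<Sum>x\<in>X. real (uX r x X)) = real (card X) * real (card X - 1)"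
    by (simp add: of_nat_sum)
  moreover have "real (card X - 1) = real (card X) - 1 \<or> card X = 0" by auto
  ultimately show ?thesis by auto
qed

lemma uX_two:
  assumes "r \<in> rankings C" "X \<subseteq> C" "x \<in> X" "y \<in> X" "x \<noteq> y" "finite X"
  shows "uX r x X \<ge> 1 \<or> uX r y X \<ge> 1"
proof -
  have d: "distinct r" "set r = C" using assms(1) by (auto simp: rankings_def)
  have xs: "x \<in> set r" "y \<in> set r" using assms d by auto
  have "pos r x \<noteq> pos r y"
  proof
    assume "pos r x = pos r y"
    then have "r ! pos r x = r ! pos r y" by simp
    then show False using pos_in[OF d(1) xs(1)] pos_in[OF d(1) xs(2)] assms(5) by simp
  qed
  then have "pos r x < pos r y \<or> pos r y < pos r x" by arith
  then show ?thesis
  proof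
    assume "pos r x < pos r y"
    then have "y \<in> {z\<in>X. pos r x < pos r z}" using assms by auto
    moreover have "finite {z\<in>X. pos r x < pos r z}" using assms(6) by simp
    ultimately have "card {z\<in>X. pos r x < pos r z} > 0" by (auto simp: card_gt_0_iff)
    then have "card {z\<in>X. pos r x < pos r z} \<ge> 1" by simp
    then show ?thesis using uX_pos[OF assms(1,2,3)] by simp
  next
    assume "pos r y < pos r x"
    then have "x \<in> {z\<in>X. pos r y < pos r z}" using assms by auto
    moreover have "finite {z\<in>X. pos r y < pos r z}" using assms(6) by simp
    ultimately have "card {z\<in>X. pos r y < pos r z} > 0" by (auto simp: card_gt_0_iff)
    then have "card {z\<in>X. pos r y < pos r z} \<ge> 1" by simp
    then show ?thesis using uX_pos[OF assms(1,2,4)] by simp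
  qed
qed

lemma finite_rankings: "finite C \<Longrightarrow> finite (rankings C)"
proof -
  assume f: "finite C"
  have "rankings C \<subseteq> {xs. set xs \<subseteq> C \<and> length xs = card C}"
    by (auto simp: rankings_def distinct_card)
  then show ?thesis using finite_lists_length_eq[OF f] finite_subset by blast
qed


lemma min_ereal_ereal: "min (ereal a) (ereal b) = ereal (min a b)"
  by (simp add: min_def)

lemma tp_cont_on: "continuous_on UNIV (total_pay C b1 b X x)"
  unfolding total_pay_def by (intro continuous_intros)

lemma tp_isCont: "isCont (total_pay C b1 b X x) z"
  using tp_cont_on[of C b1 b X x] by (simp add: continuous_on_eq_continuous_at)

lemma tp0:
  assumes "\<forall>r\<in>rankings C. 0 \<le> b r"
  shows "total_pay C b1 b X x 0 = 0"
  unfolding total_pay_def using assms by (intro sum.neutral) auto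

lemma least_sol:
  assumes "\<exists>\<rho>::real. \<rho> \<ge> 0 \<and> total_pay C b1 b X x \<rho> = c"
  shows "(LEAST \<rho>::real. \<rho> \<ge> 0 \<and> total_pay C b1 b X x \<rho> = c) \<ge> 0 \<and>
         total_pay C b1 b X x (LEAST \<rho>::real. \<rho> \<ge> 0 \<and> total_pay C b1 b X x \<rho> = c) = c \<and>
         (\<forall>\<rho>. \<rho> \<ge> 0 \<and> total_pay C b1 b X x \<rho> = c \<longrightarrow>
             (LEAST \<rho>::real. \<rho> \<ge> 0 \<and> total_pay C b1 b X x \<rho> = c) \<le> \<rho>)"
proof -
  define A where "A = {\<rho>::real. 0 \<le> \<rho> \<and> total_pay C b1 b X x \<rho> = c}"
  have cl: "closed A" unfolding A_def
    by (intro closed_Collect_conj closed_Collect_le closed_Collect_eq tp_cont_on continuous_intros)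
  have ne: "A \<noteq> {}" using assms A_def by auto
  have bb: "bdd_below A" unfolding A_def by (rule bdd_belowI[of _ 0]) auto
  have inA: "Inf A \<in> A" using closed_contains_Inf[OF ne bb cl] .
  have low: "\<forall>y\<in>A. Inf A \<le> y" using bb by (simp add: cInf_lower)
  have "(LEAST \<rho>::real. \<rho> \<ge> 0 \<and> total_pay C b1 b X x \<rho> = c) = Inf A"
    by (rule Least_equality) (use inA low A_def in auto)
  then show ?thesis using inA low A_def by auto
qed

lemma rho_nonneg: "rho C b1 b X i x \<ge> 0"
proof (cases "\<exists>\<rho>::real. \<rho> \<ge> 0 \<and> total_pay C b1 b X x \<rho> = real (card C) - real i")
  case True
  then show ?thesis using least_sol[OF True] unfolding rho_def if_P[OF True] by simp
next
  case False
  then show ?thesis unfolding rho_def if_not_P[OF False] by simp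
qed

lemma rho_fin:
  assumes "rho C b1 b X i x = ereal \<rho>"
  shows "\<rho> \<ge> 0 \<and> total_pay C b1 b X x \<rho> = real (card C) - real i"
proof (cases "\<exists>\<rho>::real. \<rho> \<ge> 0 \<and> total_pay C b1 b X x \<rho> = real (card C) - real i")
  case True
  then show ?thesis using least_sol[OF True] assms unfolding rho_def if_P[OF True] by simp
next
  case False
  then show ?thesis using assms unfolding rho_def if_not_P[OF False] by simp
qed

lemma rho_le:
  assumes "\<forall>r\<in>rankings C. 0 \<le> b r" "real (card C) - real i > 0" "0 \<le> \<rho>"
    "total_pay C b1 b X x \<rho> \<ge> real (card C) - real i"
  shows "rho C b1 b X i x \<le> ereal \<rho>"
proof -
  have "\<exists>z\<ge>0. z \<le> \<rho> \<and> total_pay C b1 b X x z = real (card C) - real i"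
    by (rule IVT) (use assms tp0[OF assms(1)] tp_isCont in auto)
  then obtain z where z: "z \<ge> 0" "z \<le> \<rho>" "total_pay C b1 b X x z = real (card C) - real i" by blast
  then have ex: "\<exists>\<rho>::real. \<rho> \<ge> 0 \<and> total_pay C b1 b X x \<rho> = real (card C) - real i" by blast
  have "(LEAST \<rho>::real. \<rho> \<ge> 0 \<and> total_pay C b1 b X x \<rho> = real (card C) - real i) \<le> z"
    using least_sol[OF ex] z by blast
  then show ?thesis using ex z by (simp add: rho_def)
qed

lemma rho_lt:
  assumes "\<forall>r\<in>rankings C. 0 \<le> b r" "real (card C) - real i > 0" "0 \<le> \<rho>"
    "ereal \<rho> < rho C b1 b X i x"
  shows "total_pay C b1 b X x \<rho> < real (card C) - real i"
  using rho_le[OF assms(1,2,3)] assms(4) by (meson linorder_not_le)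

lemma payment_fin:
  assumes "0 \<le> \<rho>"
  shows "payment b1 b X x (ereal \<rho>) r = min (\<rho> * b1 r * real (uX r x X)) (min (b r) (real (uX r x X)))"
proof -
  have e: "ereal \<rho> * ereal (b1 r * real (uX r x X)) = ereal (\<rho> * b1 r * real (uX r x X))"
    by (simp only: times_ereal.simps mult.assoc)
  show ?thesis unfolding payment_def e min_ereal_ereal real_of_ereal.simps ..
qed

lemma payment_bounds:
  assumes "0 \<le> b1 r" "0 \<le> b r" "\<rho>e \<ge> 0"
  shows "0 \<le> payment b1 b X x \<rho>e r \<and> payment b1 b X x \<rho>e r \<le> min (b r) (real (uX r x X))"
proof (cases \<rho>e)
  case (real \<rho>)
  then have "\<rho> \<ge> 0" using assms by simp
  then show ?thesis using payment_fin[of \<rho> b1 b X x r] real assms by auto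
next
  case PInf
  show ?thesis
  proof (cases "b1 r * real (uX r x X) = 0")
    case True
    then show ?thesis using PInf assms unfolding payment_def by (simp add: min_def)
  next
    case False
    then have "b1 r * real (uX r x X) > 0" using assms by simp
    then show ?thesis using PInf assms unfolding payment_def by (simp add: min_def)
  qed
next
  case MInf
  then show ?thesis using assms by simp
qed

lemma tp_as_payment:
  assumes "0 \<le> \<rho>"
  shows "total_pay C b1 b X x \<rho> = (\<Sum>r\<in>rankings C. payment b1 b X x (ereal \<rho>) r)"
  unfolding total_pay_def by (intro sum.cong refl) (simp add: payment_fin[OF assms])

lemma min1_subadd:
  fixes g :: "'b \<Rightarrow> real"
  assumes "finite A" "\<forall>r\<in>A. 0 \<le> g r"
  shows "(\<Sum>r\<in>A. min (g r) 1) \<ge> min (\<Sum>r\<in>A. g r) 1"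
  using assms
proof (induction A rule: finite_induct)
  case empty
  then show ?case by simp
next
  case (insert a A)
  define SA where "SA = (\<Sum>r\<in>A. g r)"
  define MA where "MA = (\<Sum>r\<in>A. min (g r) 1)"
  have ih: "min SA 1 \<le> MA" using insert unfolding SA_def MA_def by auto
  have m0: "0 \<le> MA" unfolding MA_def using insert by (intro sum_nonneg) auto
  have ga: "0 \<le> g a" using insert by auto
  have e1: "(\<Sum>r\<in>insert a A. min (g r) 1) = min (g a) 1 + MA" unfolding MA_def using insert by simp
  have e2: "(\<Sum>r\<in>insert a A. g r) = g a + SA" unfolding SA_def using insert by simp
  show ?case unfolding e1 e2
  proof (cases "g a \<le> 1")
    case True
    have "min (g a + SA) 1 \<le> g a + min SA 1" using ga by (simp add: min_def)
    then show "min (g a + SA) 1 \<le> min (g a) 1 + MA" using True ih by simp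
  next
    case False
    then have "min (g a) 1 = 1" by simp
    moreover have "min (g a + SA) 1 \<le> 1" by simp
    ultimately show "min (g a + SA) 1 \<le> min (g a) 1 + MA" using m0 by linarith
  qed
qed

lemma avg_bound:
  assumes finC: "finite C" and XC: "X \<subseteq> C" and k: "card X = k" "2 \<le> k"
    and bb: "\<forall>r\<in>rankings C. 0 \<le> b r \<and> b r \<le> b1 r"
    and sg: "\<forall>r\<in>rankings C. 0 \<le> \<sigma> r \<and> \<sigma> r \<le> 1" and rp: "0 \<le> \<rho>"
    and tp: "\<forall>x\<in>X. total_pay C b1 b X x \<rho> < real k - 1"
  shows "(\<Sum>r\<in>rankings C. \<sigma> r * min (\<rho> * b1 r * (real k - 1)) (b r)) < 2 * (real k - 1)"
proof -
  have finX: "finite X" using finC XC finite_subset by blast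
  have neX: "X \<noteq> {}" using k by auto
  have finR: "finite (rankings C)" using finite_rankings[OF finC] .
  have km: "real (card X - 1) = real k - 1" using k by auto
  define t where "t r = min (\<rho> * b1 r * (real k - 1)) (b r)" for r
  define tm where "tm r x = min (\<rho> * b1 r * real (uX r x X)) (min (b r) (real (uX r x X)))" for r x
  have tm_nn: "0 \<le> tm r x" if "r \<in> rankings C" for r x
    using bb that rp unfolding tm_def by auto
  have tp_eq: "total_pay C b1 b X x \<rho> = (\<Sum>r\<in>rankings C. tm r x)" for x
    unfolding total_pay_def tm_def by simp
  have t_nn: "0 \<le> t r" if "r \<in> rankings C" for r
    using bb that rp k unfolding t_def by auto
  have t_lt: "t r < real k - 1" if r: "r \<in> rankings C" for r
  proof -
    obtain \<tau> where \<tau>: "\<tau> \<in> X" "uX r \<tau> X = card X - 1" using uX_top[OF r XC finX neX] by blast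
    have "tm r \<tau> = min (t r) (real k - 1)" unfolding tm_def t_def using \<tau> km by (simp add: min.assoc)
    moreover have "tm r \<tau> \<le> total_pay C b1 b X \<tau> \<rho>"
      unfolding tp_eq by (rule member_le_sum) (use r tm_nn finR in auto)
    ultimately have "min (t r) (real k - 1) < real k - 1" using tp \<tau> by fastforce
    then show ?thesis by (simp add: min_def split: if_splits)
  qed
  have chord: "tm r x \<ge> real (uX r x X) / (real k - 1) * t r" if r: "r \<in> rankings C" and x: "x \<in> X" for r x
  proof -
    define j where "j = real (uX r x X)"
    have j0: "0 \<le> j" unfolding j_def by simp
    have j1: "j \<le> real k - 1" unfolding j_def using uX_le[OF finX x, of r] km
      by (metis of_nat_le_iff)
    have kp: "real k - 1 > 0" using k by simp
    define l where "l = j / (real k - 1)"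
    have l0: "0 \<le> l" "l \<le> 1" unfolding l_def using j0 j1 kp by auto
    have a1: "l * t r \<le> \<rho> * b1 r * j"
    proof -
      have "l * t r \<le> l * (\<rho> * b1 r * (real k - 1))" using l0 unfolding t_def
        by (intro mult_left_mono) auto
      also have "\<dots> = \<rho> * b1 r * j" unfolding l_def using kp by (simp add: field_simps)
      finally show ?thesis .
    qed
    have a2: "l * t r \<le> b r"
    proof -
      have "l * t r \<le> t r" using l0 t_nn[OF r] by (simp add: mult_left_le_one_le)
      also have "\<dots> \<le> b r" unfolding t_def by simp
      finally show ?thesis .
    qed
    have a3: "l * t r \<le> j"
    proof -
      have "l * t r \<le> l * (real k - 1)" using l0 t_lt[OF r] by (intro mult_left_mono) auto
      also have "\<dots> = j" unfolding l_def using kp by simp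
      finally show ?thesis .
    qed
    show ?thesis using a1 a2 a3 unfolding tm_def j_def[symmetric] l_def by simp
  qed
  have "(\<Sum>x\<in>X. total_pay C b1 b X x \<rho>) < (\<Sum>x\<in>X. real k - 1)"
    by (rule sum_strict_mono) (use finX neX tp in auto)
  also have "\<dots> = real k * (real k - 1)" using k by simp
  finally have s1: "(\<Sum>x\<in>X. total_pay C b1 b X x \<rho>) < real k * (real k - 1)" .
  have "(\<Sum>x\<in>X. total_pay C b1 b X x \<rho>) = (\<Sum>r\<in>rankings C. \<Sum>x\<in>X. tm r x)"
    unfolding tp_eq by (rule sum.swap)
  also have "\<dots> \<ge> (\<Sum>r\<in>rankings C. \<Sum>x\<in>X. real (uX r x X) / (real k - 1) * t r)"
    by (intro sum_mono chord) auto
  finally have s2: "(\<Sum>r\<in>rankings C. \<Sum>x\<in>X. real (uX r x X) / (real k - 1) * t r) < real k * (real k - 1)"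
    using s1 by linarith
  have s3: "(\<Sum>x\<in>X. real (uX r x X) / (real k - 1) * t r) = real k / 2 * t r" if r: "r \<in> rankings C" for r
  proof -
    have "(\<Sum>x\<in>X. real (uX r x X) / (real k - 1) * t r) = (\<Sum>x\<in>X. real (uX r x X) * (t r / (real k - 1)))"
      by (rule sum.cong) auto
    also have "\<dots> = (\<Sum>x\<in>X. real (uX r x X)) * (t r / (real k - 1))"
      by (rule sum_distrib_right[symmetric])
    also have "\<dots> = real k * (real k - 1) / 2 * (t r / (real k - 1))"
    proof -
      have su: "(\<Sum>x\<in>X. real (uX r x X)) = real k * (real k - 1) / 2"
        using uX_sum_real[OF r XC finX] k by simp
      show ?thesis by (simp only: su)
    qed
    also have "\<dots> = real k / 2 * t r" using k by (simp add: field_simps)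
    finally show ?thesis .
  qed
  have "(\<Sum>r\<in>rankings C. \<Sum>x\<in>X. real (uX r x X) / (real k - 1) * t r) = (\<Sum>r\<in>rankings C. real k / 2 * t r)"
    by (rule sum.cong[OF refl]) (erule s3)
  then have "(\<Sum>r\<in>rankings C. real k / 2 * t r) < real k * (real k - 1)" using s2 by linarith
  then have "real k / 2 * (\<Sum>r\<in>rankings C. t r) < real k * (real k - 1)"
    by (simp add: sum_distrib_left)
  then have s4: "(\<Sum>r\<in>rankings C. t r) < 2 * (real k - 1)"
  proof (rule contrapos_pp)
    assume "\<not> (\<Sum>r\<in>rankings C. t r) < 2 * (real k - 1)"
    then have "2 * (real k - 1) \<le> (\<Sum>r\<in>rankings C. t r)" by simp
    then have "real k / 2 * (2 * (real k - 1)) \<le> real k / 2 * (\<Sum>r\<in>rankings C. t r)"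
      by (intro mult_left_mono) auto
    moreover have "real k / 2 * (2 * (real k - 1)) = real k * (real k - 1)" by simp
    ultimately show "\<not> real k / 2 * (\<Sum>r\<in>rankings C. t r) < real k * (real k - 1)" by linarith
  qed
  have "(\<Sum>r\<in>rankings C. \<sigma> r * t r) \<le> (\<Sum>r\<in>rankings C. t r)"
    by (intro sum_mono) (use sg t_nn in \<open>auto simp: mult_left_le_one_le\<close>)
  then show ?thesis using s4 unfolding t_def by linarith
qed


lemma feas3:
  assumes finC: "finite C" and XC: "X \<subseteq> C" and k3: "card X = 3"
    and bb: "\<forall>r\<in>rankings C. 0 \<le> b r \<and> b r \<le> b1 r"
    and tot: "(\<Sum>r\<in>rankings C. b r) = 3"
  shows "\<exists>x\<in>X. total_pay C b1 b X x 1 \<ge> 2"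
proof (rule ccontr)
  assume "\<not> (\<exists>x\<in>X. total_pay C b1 b X x 1 \<ge> 2)"
  then have ntp: "\<forall>x\<in>X. total_pay C b1 b X x 1 < 2" by auto
  have finX: "finite X" using finC XC finite_subset by blast
  have neX: "X \<noteq> {}" using k3 by auto
  have finR: "finite (rankings C)" using finite_rankings[OF finC] .
  define u where "u r x = real (uX r x X)" for r x
  define f where "f x = (\<Sum>r\<in>rankings C. min (b r) (u r x))" for x
  have u0: "0 \<le> u r x" for r x unfolding u_def by simp
  have unat: "u r x = 0 \<or> u r x \<ge> 1" for r x unfolding u_def by auto
  have tpf: "total_pay C b1 b X x 1 = f x" for x
    unfolding total_pay_def f_def u_def[symmetric]
  proof (intro sum.cong refl)
    fix r assume r: "r \<in> rankings C"
    show "min (1 * b1 r * u r x) (min (b r) (u r x)) = min (b r) (u r x)"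
    proof (cases "u r x = 0")
      case True then show ?thesis using bb r by simp
    next
      case False
      then have "u r x \<ge> 1" using unat by blast
      then have "b1 r * u r x \<ge> b1 r * 1" using bb r
        by (intro mult_left_mono) auto
      moreover have "b r \<le> b1 r" using bb r by auto
      moreover have "min (b r) (u r x) \<le> b r" by simp
      ultimately have "b1 r * u r x \<ge> min (b r) (u r x)" by linarith
      then show ?thesis by (simp add: min_def)
    qed
  qed
  have fl: "\<forall>x\<in>X. f x < 2" using ntp tpf by simp
  have term_nn: "0 \<le> min (b r) (u r x)" if "r \<in> rankings C" for r x using bb that u0 by simp
  have topr: "\<exists>\<tau>\<in>X. u r \<tau> = 2" if r: "r \<in> rankings C" for r
    using uX_top[OF r XC finX neX] k3 unfolding u_def by auto
  have blt2: "b r < 2" if r: "r \<in> rankings C" for r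
  proof -
    obtain \<tau> where \<tau>: "\<tau> \<in> X" "u r \<tau> = 2" using topr[OF r] by blast
    have "min (b r) (u r \<tau>) \<le> f \<tau>" unfolding f_def
      by (rule member_le_sum) (use r term_nn finR in auto)
    moreover have "f \<tau> < 2" using fl \<tau>(1) by auto
    ultimately have "min (b r) 2 < 2" using \<tau>(2) by simp
    then show ?thesis by (simp add: min_less_iff_disj)
  qed
  have atmost1: "card {x\<in>X. u r x = 0} \<le> 1" if r: "r \<in> rankings C" for r
  proof -
    have "\<forall>a1\<in>{x\<in>X. u r x = 0}. \<forall>a2\<in>{x\<in>X. u r x = 0}. a1 = a2"
      using uX_two[OF r XC _ _ _ finX] unfolding u_def by fastforce
    then show ?thesis using card_le_Suc0_iff_eq[of "{x\<in>X. u r x = 0}"] finX by simp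
  qed
  have sum2: "(\<Sum>x\<in>X. min (b r) (u r x)) \<ge> 2 * min (b r) 1" if r: "r \<in> rankings C" for r
  proof -
    define P where "P = {x\<in>X. u r x \<ge> 1}"
    have "P = X - {x\<in>X. u r x = 0}" unfolding P_def using unat by force
    moreover have "card (X - {x\<in>X. u r x = 0}) = card X - card {x\<in>X. u r x = 0}"
      by (rule card_Diff_subset) (use finX in auto)
    ultimately have "card P \<ge> 2" using atmost1[OF r] k3 by simp
    have "(\<Sum>x\<in>X. min (b r) (u r x)) \<ge> (\<Sum>x\<in>P. min (b r) (u r x))"
      by (rule sum_mono2) (use finX P_def term_nn r in auto)
    also have "(\<Sum>x\<in>P. min (b r) (u r x)) \<ge> (\<Sum>x\<in>P. min (b r) 1)"
      by (rule sum_mono) (auto simp: P_def)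
    also have "(\<Sum>x\<in>P. min (b r) 1) = real (card P) * min (b r) 1" by simp
    also have "\<dots> \<ge> 2 * min (b r) 1"
      using \<open>card P \<ge> 2\<close> bb r by (intro mult_right_mono) auto
    finally show ?thesis by linarith
  qed
  have "\<exists>r0\<in>rankings C. b r0 > 1"
  proof (rule ccontr)
    assume "\<not> (\<exists>r0\<in>rankings C. b r0 > 1)"
    then have le1: "\<forall>r\<in>rankings C. b r \<le> 1" by auto
    have "(\<Sum>x\<in>X. f x) = (\<Sum>r\<in>rankings C. \<Sum>x\<in>X. min (b r) (u r x))"
      unfolding f_def by (rule sum.swap)
    also have "\<dots> \<ge> (\<Sum>r\<in>rankings C. 2 * min (b r) 1)"
      by (intro sum_mono sum2)
    also have "(\<Sum>r\<in>rankings C. 2 * min (b r) 1) = 2 * (\<Sum>r\<in>rankings C. b r)"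
      using le1 by (simp add: sum_distrib_left min_def)
    finally have "(\<Sum>x\<in>X. f x) \<ge> 6" using tot by simp
    moreover have "(\<Sum>x\<in>X. f x) < (\<Sum>x\<in>X. 2)"
      by (rule sum_strict_mono) (use finX neX fl in auto)
    ultimately show False using k3 by simp
  qed
  then obtain r0 where r0: "r0 \<in> rankings C" "b r0 > 1" by blast
  obtain \<tau> where \<tau>: "\<tau> \<in> X" "u r0 \<tau> = 2" using topr[OF r0(1)] by blast
  have "card (X - {\<tau>}) = 2" using k3 \<tau> finX by simp
  from card_2_iff[THEN iffD1, OF this] obtain y1 y2 where y12: "X - {\<tau>} = {y1, y2}" "y1 \<noteq> y2"
    by blast
  have "y1 \<in> X - {\<tau>}" "y2 \<in> X - {\<tau>}" using y12(1) by auto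
  then have yy: "y1 \<in> X" "y2 \<in> X" "y1 \<noteq> \<tau>" "y2 \<noteq> \<tau>" by auto
  have "uX r0 y1 X \<ge> 1 \<or> uX r0 y2 X \<ge> 1"
    by (rule uX_two[OF r0(1) XC yy(1) yy(2) y12(2) finX])
  then have "u r0 y1 \<ge> 1 \<or> u r0 y2 \<ge> 1" unfolding u_def by auto
  then obtain y0 where y0: "y0 \<in> X" "y0 \<noteq> \<tau>" "u r0 y0 \<ge> 1" using yy by blast
  define Rr where "Rr = rankings C - {r0}"
  define A where "A = {r\<in>Rr. u r \<tau> \<ge> 1}"
  define Bs where "Bs = {r\<in>Rr. u r \<tau> = 0}"
  have finRr: "finite Rr" unfolding Rr_def using finR by simp
  have ABu: "A \<union> Bs = Rr" "A \<inter> Bs = {}" unfolding A_def Bs_def using unat by auto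
  have finA: "finite A" "finite Bs" unfolding A_def Bs_def using finRr by auto
  have sumAB: "(\<Sum>r\<in>A. b r) + (\<Sum>r\<in>Bs. b r) = 3 - b r0"
  proof -
    have "(\<Sum>r\<in>A. b r) + (\<Sum>r\<in>Bs. b r) = (\<Sum>r\<in>Rr. b r)"
      using sum.union_disjoint[OF finA ABu(2), of b] ABu(1) by simp
    also have "\<dots> = 3 - b r0" unfolding Rr_def using tot r0 finR
      by (simp add: sum_diff1)
    finally show ?thesis .
  qed
  have bnnA: "\<forall>r\<in>A. 0 \<le> b r" "\<forall>r\<in>Bs. 0 \<le> b r" using bb unfolding A_def Bs_def Rr_def by auto
  have fsplit: "f x = min (b r0) (u r0 x) + (\<Sum>r\<in>Rr. min (b r) (u r x))" for x
    unfolding f_def Rr_def using finR r0(1) by (simp add: sum.remove)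
  have "f \<tau> \<ge> b r0 + min (\<Sum>r\<in>A. b r) 1"
  proof -
    have "(\<Sum>r\<in>Rr. min (b r) (u r \<tau>)) \<ge> (\<Sum>r\<in>A. min (b r) (u r \<tau>))"
      by (rule sum_mono2) (use finRr A_def Rr_def term_nn in auto)
    also have "(\<Sum>r\<in>A. min (b r) (u r \<tau>)) \<ge> (\<Sum>r\<in>A. min (b r) 1)"
      by (rule sum_mono) (auto simp: A_def)
    also have "(\<Sum>r\<in>A. min (b r) 1) \<ge> min (\<Sum>r\<in>A. b r) 1"
      by (rule min1_subadd[OF finA(1) bnnA(1)])
    finally have "(\<Sum>r\<in>Rr. min (b r) (u r \<tau>)) \<ge> min (\<Sum>r\<in>A. b r) 1" .
    moreover have "min (b r0) (u r0 \<tau>) = b r0" using \<tau> blt2[OF r0(1)] by simp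
    ultimately show ?thesis using fsplit[of \<tau>] by linarith
  qed
  moreover have "f y0 \<ge> 1 + min (\<Sum>r\<in>Bs. b r) 1"
  proof -
    have "(\<Sum>r\<in>Rr. min (b r) (u r y0)) \<ge> (\<Sum>r\<in>Bs. min (b r) (u r y0))"
      by (rule sum_mono2) (use finRr Bs_def Rr_def term_nn in auto)
    also have "(\<Sum>r\<in>Bs. min (b r) (u r y0)) \<ge> (\<Sum>r\<in>Bs. min (b r) 1)"
    proof (rule sum_mono)
      fix r assume r: "r \<in> Bs"
      then have rr: "r \<in> rankings C" "u r \<tau> = 0" unfolding Bs_def Rr_def by auto
      have "u r \<tau> \<ge> 1 \<or> u r y0 \<ge> 1"
        using uX_two[OF rr(1) XC \<tau>(1) y0(1) _ finX] y0(2) unfolding u_def by auto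
      then have "u r y0 \<ge> 1" using rr by simp
      then show "min (b r) 1 \<le> min (b r) (u r y0)" by simp
    qed
    also have "(\<Sum>r\<in>Bs. min (b r) 1) \<ge> min (\<Sum>r\<in>Bs. b r) 1"
      by (rule min1_subadd[OF finA(2) bnnA(2)])
    finally have "(\<Sum>r\<in>Rr. min (b r) (u r y0)) \<ge> min (\<Sum>r\<in>Bs. b r) 1" .
    moreover have "min (b r0) (u r0 y0) \<ge> 1" using y0 r0 by simp
    ultimately show ?thesis using fsplit[of y0] by linarith
  qed
  moreover have "f \<tau> < 2" "f y0 < 2" using fl \<tau> y0 by auto
  ultimately show False using sumAB blt2[OF r0(1)] r0(2)
    by (auto simp: min_def split: if_splits)
qed


lemma set_take_pos:
  assumes "distinct s"
  shows "y \<in> set (take n s) \<longleftrightarrow> y \<in> set s \<and> pos s y < n"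
proof
  assume "y \<in> set (take n s)"
  then obtain t where t: "t < length (take n s)" "take n s ! t = y" by (auto simp: in_set_conv_nth)
  then have "t < n" "t < length s" "s ! t = y" by auto
  then show "y \<in> set s \<and> pos s y < n" using pos_nth[OF assms] by (metis nth_mem)
next
  assume a: "y \<in> set s \<and> pos s y < n"
  then have "pos s y < length s" "s ! pos s y = y" using pos_in[OF assms] by auto
  then show "y \<in> set (take n s)" using a
    by (metis in_set_conv_nth length_take min_less_iff_conj nth_take)
qed

lemma set_drop_pos:
  assumes "distinct s"
  shows "y \<in> set (drop n s) \<longleftrightarrow> y \<in> set s \<and> n \<le> pos s y"
proof -
  have "set s = set (take n s) \<union> set (drop n s)"
    by (metis append_take_drop_id set_append)
  moreover have "set (take n s) \<inter> set (drop n s) = {}"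
    using assms by (metis append_take_drop_id distinct_append)
  ultimately show ?thesis using set_take_pos[OF assms, of y n] by auto
qed

lemma agree_sum:
  assumes r: "r \<in> rankings C" and s: "s \<in> rankings C" and finC: "finite C"
  shows "agree C r s = (\<Sum>i<card C. card {y \<in> set (drop (Suc i) s). prefers r (s ! i) y})"
proof -
  have ds: "distinct s" "set s = C" using s by (auto simp: rankings_def)
  have dr: "distinct r" "set r = C" using r by (auto simp: rankings_def)
  have ls: "length s = card C" using ds distinct_card by fastforce
  have e1: "{(x, y) \<in> C \<times> C. prefers r x y \<and> prefers s x y} = Sigma C (\<lambda>x. {y\<in>C. prefers r x y \<and> prefers s x y})"
    by auto
  define g where "g x = card {y\<in>C. prefers r x y \<and> prefers s x y}" for x
  have "agree C r s = (\<Sum>x\<in>C. g x)"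
    unfolding agree_def e1 g_def by (rule card_SigmaI) (use finC in auto)
  also have "(\<Sum>x\<in>C. g x) = (\<Sum>i<card C. g (s ! i))"
  proof -
    have img: "C = (\<lambda>i. s ! i) ` {..<card C}"
      using ds ls by (metis atLeast_upt image_set map_nth set_map lessThan_atLeast0)
    have inj: "inj_on (\<lambda>i. s ! i) {..<card C}" using ds ls by (simp add: inj_on_nth)
    show ?thesis by (subst img) (rule sum.reindex[OF inj, unfolded comp_def])
  qed
  also have "\<dots> = (\<Sum>i<card C. card {y\<in>C. prefers r (s ! i) y \<and> prefers s (s ! i) y})"
    unfolding g_def ..
  also have "\<dots> = (\<Sum>i<card C. card {y \<in> set (drop (Suc i) s). prefers r (s ! i) y})"
  proof (rule sum.cong[OF refl])
    fix i assume i: "i \<in> {..<card C}"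
    have "{y\<in>C. prefers r (s ! i) y \<and> prefers s (s ! i) y} = {y \<in> set (drop (Suc i) s). prefers r (s ! i) y}"
      using i ds ls by (auto simp: set_drop_pos prefers_pos[OF ds(1)] pos_nth)
    then show "card {y\<in>C. prefers r (s ! i) y \<and> prefers s (s ! i) y} = card {y \<in> set (drop (Suc i) s). prefers r (s ! i) y}"
      by simp
  qed
  finally show ?thesis .
qed

lemma uX_round:
  assumes r: "r \<in> rankings C" and s: "s \<in> rankings C" and i: "i < card C"
  shows "uX r (s ! i) (C - set (take i s)) = card {y \<in> set (drop (Suc i) s). prefers r (s ! i) y}"
proof -
  have ds: "distinct s" "set s = C" using s by (auto simp: rankings_def)
  have ls: "length s = card C" using ds distinct_card by fastforce
  have key: "y = s ! i \<longleftrightarrow> pos s y = i" if y: "y \<in> set s" for y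
  proof
    assume "y = s ! i" then show "pos s y = i" using pos_nth[OF ds(1)] i ls by simp
  next
    assume "pos s y = i" then show "y = s ! i" using pos_in[OF ds(1) y] by simp
  qed
  have "y \<in> (C - set (take i s)) - {s ! i} \<longleftrightarrow> y \<in> set (drop (Suc i) s)" for y
    using key[of y] ds by (auto simp: set_drop_pos[OF ds(1)] set_take_pos[OF ds(1)])
  then have "(C - set (take i s)) - {s ! i} = set (drop (Suc i) s)" by blast
  then show ?thesis unfolding uX_def by simp
qed

lemma agree_decomp:
  assumes r: "r \<in> rankings C" and s: "s \<in> rankings C" and finC: "finite C" and m: "card C \<ge> 2"
  shows "real (agree C r s) = (\<Sum>i\<in>{1..card C - 2}. real (uX r (s ! (i - 1)) (C - set (take (i - 1) s))))
          + (if prefers r (s ! (card C - 2)) (s ! (card C - 1)) then 1 else 0)"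
proof -
  define f where "f i = card {y \<in> set (drop (Suc i) s). prefers r (s ! i) y}" for i
  have ds: "distinct s" "set s = C" using s by (auto simp: rankings_def)
  have ls: "length s = card C" using ds distinct_card by fastforce
  have cm: "card C = Suc (Suc (card C - 2))" using m by simp
  have "agree C r s = (\<Sum>i<card C. f i)" unfolding f_def by (rule agree_sum[OF r s finC])
  also have "\<dots> = (\<Sum>i<card C - 2. f i) + f (card C - 2) + f (card C - 1)"
  proof -
    define n where "n = card C - 2"
    have cn: "card C = Suc (Suc n)" "card C - 2 = n" "card C - 1 = Suc n" using cm unfolding n_def by auto
    show ?thesis unfolding cn by simp
  qed
  finally have a1: "agree C r s = (\<Sum>i<card C - 2. f i) + f (card C - 2) + f (card C - 1)" .
  have f_last: "f (card C - 1) = 0" unfolding f_def using ls m by simp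
  have dr: "drop (Suc (card C - 2)) s = [s ! (card C - 1)]"
  proof -
    have "length (drop (Suc (card C - 2)) s) = 1" using ls m by simp
    moreover have "drop (Suc (card C - 2)) s ! 0 = s ! (card C - 1)" using ls m
      by (simp add: Suc_diff_Suc numeral_2_eq_2)
    ultimately show ?thesis
      by (metis One_nat_def length_0_conv length_Suc_conv nth_Cons_0)
  qed
  have f_pen: "real (f (card C - 2)) = (if prefers r (s ! (card C - 2)) (s ! (card C - 1)) then 1 else 0)"
  proof -
    have "{y \<in> set [s ! (card C - 1)]. prefers r (s ! (card C - 2)) y} =
      (if prefers r (s ! (card C - 2)) (s ! (card C - 1)) then {s ! (card C - 1)} else {})" by auto
    then show ?thesis unfolding f_def dr by simp
  qed
  have f_mid: "(\<Sum>i<card C - 2. real (f i)) = (\<Sum>i\<in>{1..card C - 2}. real (uX r (s ! (i - 1)) (C - set (take (i - 1) s))))"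
  proof -
    have "(\<Sum>i\<in>{1..card C - 2}. real (uX r (s ! (i - 1)) (C - set (take (i - 1) s))))
        = (\<Sum>i<card C - 2. real (uX r (s ! (Suc i - 1)) (C - set (take (Suc i - 1) s))))"
      by (simp add: sum.atLeast1_atMost_eq)
    also have "\<dots> = (\<Sum>i<card C - 2. real (f i))"
      by (rule sum.cong[OF refl]) (use uX_round[OF r s] in \<open>auto simp: f_def\<close>)
    finally show ?thesis by simp
  qed
  show ?thesis using a1 f_last f_pen f_mid by (simp add: of_nat_sum)
qed


lemma real_choose2: "real (n choose 2) = real n * (real n - 1) / 2"
proof (induction n)
  case 0
  then show ?case by simp
next
  case (Suc n)
  have "Suc n choose 2 = n + (n choose 2)"
    by (simp add: numeral_2_eq_2)
  then show ?case using Suc by (simp add: field_simps)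
qed

lemma xi_ineq:
  assumes "4 \<le> m"
  shows "real m * (real m - 1) / 2 \<le> real (m - m div 4) * (real (m - m div 4) - 1)"
proof -
  have d: "4 * (m div 4) \<le> m" by simp
  have e: "real (m - m div 4) = real m - real (m div 4)" by (simp add: of_nat_diff)
  have d': "4 * real (m div 4) \<le> real m" using d by linarith
  define n where "n = real (m - m div 4)"
  have n1: "n \<ge> 3 * real m / 4" unfolding n_def e using d' by linarith
  have m4: "real m \<ge> 4" using assms by simp
  have "n * (n - 1) \<ge> (3 * real m / 4) * (3 * real m / 4 - 1)"
    using n1 m4 by (intro mult_mono) auto
  moreover have "(3 * real m / 4) * (3 * real m / 4 - 1) \<ge> real m * (real m - 1) / 2"
  proof -
    have e: "(3 * real m / 4) * (3 * real m / 4 - 1) - real m * (real m - 1) / 2 = real m * (real m - 4) / 16"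
      by (simp add: field_simps)
    have "real m * (real m - 4) \<ge> 0" using m4 by simp
    then show ?thesis using e by linarith
  qed
  ultimately show ?thesis unfolding n_def by linarith
qed

locale rctx =
  fixes C :: "'a set" and R S :: "'a list \<Rightarrow> real" and rhd :: "'a list"
    and b :: "nat \<Rightarrow> 'a list \<Rightarrow> real"
  assumes finC: "finite C" and m4: "card C \<ge> 4"
    and Rr: "\<forall>r\<in>rankings C. 0 \<le> R r \<and> R r \<le> 1"
    and Rs: "(\<Sum>r\<in>rankings C. R r) = 1"
    and rhdR: "rhd \<in> rankings C"
    and Ssub: "\<forall>r\<in>rankings C. 0 \<le> S r \<and> S r \<le> R r"
    and b1: "b 1 = (\<lambda>r. R r * real (card C choose 2))"
    and rounds: "\<forall>i \<in> {1..card C - 2}.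
           (let X = C - set (take (i - 1) rhd); x = rhd ! (i - 1) in
              (\<forall>y\<in>X. rho C (b 1) (b i) X i x \<le> rho C (b 1) (b i) X i y) \<and>
              (\<forall>r\<in>rankings C. b (Suc i) r =
                  b i r - payment (b 1) (b i) X x (rho C (b 1) (b i) X i x) r))"
    and final: "(let x = rhd ! (card C - 2); y = rhd ! (card C - 1) in
           (\<Sum>r\<in>{r\<in>rankings C. prefers r x y}. b (card C - 1) r) \<ge>
           (\<Sum>r\<in>{r\<in>rankings C. prefers r y x}. b (card C - 1) r))"
begin

abbreviation "m \<equiv> card C"
abbreviation "MM \<equiv> real (card C choose 2)"
abbreviation "Rk \<equiv> rankings C"

definition X where "X i = C - set (take (i - 1) rhd)"
definition xr where "xr i = rhd ! (i - 1)"
definition rh where "rh i = rho C (b 1) (b i) (X i) i (xr i)"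
definition pay where "pay i r = payment (b 1) (b i) (X i) (xr i) (rh i) r"
definition uu where "uu i r = real (uX r (xr i) (X i))"
definition kk where "kk i = card C + 1 - i"
definition sg where "sg r = S r / R r"
definition BB where "BB i = (\<Sum>r\<in>rankings C. sg r * b i r)"
definition PP where "PP i = (\<Sum>r\<in>rankings C. sg r * pay i r)"
definition UU where "UU i = (\<Sum>r\<in>rankings C. S r * uu i r)"
definition TT where "TT i = (\<Sum>r\<in>rankings C. b i r)"
definition rr where "rr i = real_of_ereal (rh i)"

lemma finR: "finite Rk" using finite_rankings[OF finC] .

lemma MM_pos: "MM > 0" using m4 by (simp add: real_choose2)

lemma rhd_props: "distinct rhd" "set rhd = C" "length rhd = m"
  using rhdR by (auto simp: rankings_def distinct_card)

lemma X_props: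
  assumes "1 \<le> i" "i \<le> m"
  shows "card (X i) = kk i" "X i \<subseteq> C" "xr i \<in> X i" "finite (X i)"
proof -
  have st: "set (take (i - 1) rhd) \<subseteq> C" using rhd_props by (metis set_take_subset)
  have ct: "card (set (take (i - 1) rhd)) = i - 1"
    using rhd_props assms by (simp add: distinct_card)
  show "card (X i) = kk i" unfolding X_def kk_def
    using st ct finC assms by (simp add: card_Diff_subset finite_subset)
  show "X i \<subseteq> C" unfolding X_def by auto
  show "finite (X i)" unfolding X_def using finC by simp
  have il: "i - 1 < length rhd" using rhd_props assms by simp
  have "rhd ! (i - 1) \<in> set rhd" by (rule nth_mem[OF il])
  then have "xr i \<in> C" unfolding xr_def using rhd_props by simp
  moreover have "pos rhd (rhd ! (i - 1)) = i - 1" by (rule pos_nth[OF rhd_props(1) il])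
  then have "xr i \<notin> set (take (i - 1) rhd)" unfolding xr_def
    by (simp add: set_take_pos[OF rhd_props(1)])
  ultimately show "xr i \<in> X i" unfolding X_def by simp
qed

lemma rnd:
  assumes "1 \<le> i" "i \<le> m - 2"
  shows "(\<forall>y\<in>X i. rh i \<le> rho C (b 1) (b i) (X i) i y) \<and>
         (\<forall>r\<in>Rk. b (Suc i) r = b i r - pay i r)"
  using rounds assms unfolding rh_def pay_def X_def xr_def Let_def by auto

lemma b1_nn: "r \<in> Rk \<Longrightarrow> 0 \<le> b 1 r"
  using Rr b1 by simp

lemma rh_nn: "rh i \<ge> 0" unfolding rh_def by (rule rho_nonneg)

lemma b_bnd: "1 \<le> i \<Longrightarrow> i \<le> m - 1 \<Longrightarrow> \<forall>r\<in>Rk. 0 \<le> b i r \<and> b i r \<le> b 1 r"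
proof (induction i rule: nat_induct_at_least)
  case base
  then show ?case using b1_nn by simp
next
  case (Suc i)
  show ?case
  proof
    fix r assume r: "r \<in> Rk"
    have ih: "0 \<le> b i r" "b i r \<le> b 1 r" using Suc r by auto
    have pb: "0 \<le> pay i r \<and> pay i r \<le> min (b i r) (real (uX r (xr i) (X i)))"
      unfolding pay_def by (rule payment_bounds) (use b1_nn[OF r] ih rh_nn in auto)
    have "b (Suc i) r = b i r - pay i r" using rnd[of i] Suc r by auto
    then show "0 \<le> b (Suc i) r \<and> b (Suc i) r \<le> b 1 r" using pb ih by auto
  qed
qed

lemma pay_bnd:
  assumes "1 \<le> i" "i \<le> m - 2" "r \<in> Rk"
  shows "0 \<le> pay i r \<and> pay i r \<le> b i r \<and> pay i r \<le> uu i r"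
proof -
  have ih: "0 \<le> b i r" "b i r \<le> b 1 r" using b_bnd[of i] assms by auto
  have pb: "0 \<le> pay i r \<and> pay i r \<le> min (b i r) (real (uX r (xr i) (X i)))"
    unfolding pay_def by (rule payment_bounds) (use b1_nn[OF assms(3)] ih rh_nn in auto)
  then show ?thesis unfolding uu_def by auto
qed

lemma b_step:
  assumes "1 \<le> i" "i \<le> m - 2" "r \<in> Rk"
  shows "b (Suc i) r = b i r - pay i r"
  using rnd assms by auto

lemma pay_fin:
  assumes "1 \<le> i" "i \<le> m - 2" "rh i = ereal \<rho>"
  shows "\<rho> \<ge> 0" "\<forall>r\<in>Rk. pay i r \<le> \<rho> * b 1 r * uu i r"
    "(\<Sum>r\<in>Rk. pay i r) = real m - real i"
proof -
  have f: "\<rho> \<ge> 0 \<and> total_pay C (b 1) (b i) (X i) (xr i) \<rho> = real m - real i"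
    using rho_fin[of C "b 1" "b i" "X i" i "xr i" \<rho>] assms(3) unfolding rh_def by simp
  then show "\<rho> \<ge> 0" by simp
  have pe: "pay i r = min (\<rho> * b 1 r * uu i r) (min (b i r) (uu i r))" for r
    unfolding pay_def assms(3) uu_def by (rule payment_fin) (use f in simp)
  show "\<forall>r\<in>Rk. pay i r \<le> \<rho> * b 1 r * uu i r" using pe by simp
  show "(\<Sum>r\<in>Rk. pay i r) = real m - real i"
    using f tp_as_payment[of \<rho> C "b 1" "b i" "X i" "xr i"] unfolding pay_def assms(3) by simp
qed

lemma kk_real: "1 \<le> i \<Longrightarrow> i \<le> m \<Longrightarrow> real (kk i) - 1 = real m - real i"
  unfolding kk_def by (simp add: of_nat_diff)

lemma avg_round:
  assumes i: "1 \<le> i" "i \<le> m - 2"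
    and sgb: "\<forall>r\<in>Rk. 0 \<le> \<sigma> r \<and> \<sigma> r \<le> 1" and rp: "0 \<le> \<rho>'" and lt: "ereal \<rho>' < rh i"
  shows "(\<Sum>r\<in>Rk. \<sigma> r * min (\<rho>' * b 1 r * (real (kk i) - 1)) (b i r)) < 2 * (real (kk i) - 1)"
proof -
  have im: "i \<le> m" using i by simp
  have bb: "\<forall>r\<in>Rk. 0 \<le> b i r \<and> b i r \<le> b 1 r" using b_bnd[of i] i by auto
  have tp: "\<forall>x\<in>X i. total_pay C (b 1) (b i) (X i) x \<rho>' < real (kk i) - 1"
  proof
    fix y assume y: "y \<in> X i"
    have "ereal \<rho>' < rho C (b 1) (b i) (X i) i y" using rnd[OF i] y lt by (meson less_le_trans)
    then have "total_pay C (b 1) (b i) (X i) y \<rho>' < real m - real i"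
      by (intro rho_lt) (use bb rp i m4 in auto)
    then show "total_pay C (b 1) (b i) (X i) y \<rho>' < real (kk i) - 1" using kk_real[OF i(1) im] by simp
  qed
  show ?thesis
    by (rule avg_bound[OF finC X_props(2)[OF i(1) im] X_props(1)[OF i(1) im] _ bb sgb rp tp])
       (use i m4 in \<open>auto simp: kk_def\<close>)
qed

lemma claimP:
  assumes i: "1 \<le> i" "i \<le> m - 3" and T: "TT i = real (kk i choose 2)"
  shows "rh i \<le> ereal (1 / (real (kk i) - 1))"
proof (rule ccontr)
  assume "\<not> rh i \<le> ereal (1 / (real (kk i) - 1))"
  then have lt: "ereal (1 / (real (kk i) - 1)) < rh i" by simp
  have i2: "i \<le> m - 2" using i by simp
  have k4: "real (kk i) \<ge> 4" using i m4 unfolding kk_def by simp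
  have bb: "\<forall>r\<in>Rk. 0 \<le> b i r \<and> b i r \<le> b 1 r" using b_bnd[of i] i by auto
  have "(\<Sum>r\<in>Rk. 1 * min (1 / (real (kk i) - 1) * b 1 r * (real (kk i) - 1)) (b i r)) < 2 * (real (kk i) - 1)"
    by (rule avg_round[OF i(1) i2 _ _ lt]) (use k4 in auto)
  moreover have "(\<Sum>r\<in>Rk. 1 * min (1 / (real (kk i) - 1) * b 1 r * (real (kk i) - 1)) (b i r)) = TT i"
    unfolding TT_def using bb k4 by (intro sum.cong) auto
  ultimately have "real (kk i) * (real (kk i) - 1) / 2 < 2 * (real (kk i) - 1)"
    using T real_choose2 by simp
  moreover have "real (kk i) * (real (kk i) - 1) / 2 - 2 * (real (kk i) - 1) = (real (kk i) - 1) * (real (kk i) - 4) / 2"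
    by (simp add: field_simps)
  moreover have "(real (kk i) - 1) * (real (kk i) - 4) \<ge> 0" using k4 by simp
  ultimately show False by linarith
qed

lemma fin_from_le: "rh i \<le> ereal c \<Longrightarrow> \<exists>\<rho>. rh i = ereal \<rho>"
  using rh_nn[of i] by (cases "rh i") auto

lemma TT_step:
  assumes i: "1 \<le> i" "i \<le> m - 2" and fin: "rh i = ereal \<rho>"
  shows "TT (Suc i) = TT i - (real m - real i)"
proof -
  have "TT (Suc i) = (\<Sum>r\<in>Rk. b i r - pay i r)" unfolding TT_def using b_step[OF i] by simp
  also have "\<dots> = TT i - (\<Sum>r\<in>Rk. pay i r)" unfolding TT_def by (simp add: sum_subtractf)
  finally show ?thesis using pay_fin(3)[OF i fin] by simp
qed

lemma TT_1: "TT 1 = MM"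
  unfolding TT_def b1 using Rs by (simp add: sum_distrib_right[symmetric])

lemma TT_all: "1 \<le> i \<Longrightarrow> i \<le> m - 1 \<Longrightarrow> TT i = real (kk i choose 2) \<and> (\<forall>j. 1 \<le> j \<and> j < i \<longrightarrow> (\<exists>\<rho>. rh j = ereal \<rho>))"
proof (induction i rule: nat_induct_at_least)
  case base
  then show ?case using TT_1 by (simp add: kk_def)
next
  case (Suc i)
  have i: "1 \<le> i" "i \<le> m - 2" using Suc by auto
  have T: "TT i = real (kk i choose 2)" using Suc by auto
  have fin: "\<exists>\<rho>. rh i = ereal \<rho>"
  proof (cases "i \<le> m - 3")
    case True
    show ?thesis by (rule fin_from_le[OF claimP[OF i(1) True T]])
  next
    case False
    then have ie: "i = m - 2" using i by simp
    have k3: "kk i = 3" using ie m4 unfolding kk_def by simp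
    have im: "i \<le> m" using i by simp
    have bb: "\<forall>r\<in>Rk. 0 \<le> b i r \<and> b i r \<le> b 1 r" using b_bnd[of i] i by auto
    have "TT i = 3" using T k3 by (simp add: real_choose2)
    then obtain y where y: "y \<in> X i" "total_pay C (b 1) (b i) (X i) y 1 \<ge> 2"
      using feas3[OF finC X_props(2)[OF i(1) im] _ bb] X_props(1)[OF i(1) im] k3
      unfolding TT_def by auto
    have "rho C (b 1) (b i) (X i) i y \<le> ereal 1"
      by (rule rho_le) (use bb y ie m4 in auto)
    then have "rh i \<le> ereal 1" using rnd[OF i] y by (meson order_trans)
    then show ?thesis using fin_from_le by blast
  qed
  then obtain \<rho> where \<rho>: "rh i = ereal \<rho>" by blast
  have "TT (Suc i) = TT i - (real m - real i)" using TT_step[OF i \<rho>] .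
  also have "\<dots> = real (kk (Suc i) choose 2)"
    using T i unfolding kk_def by (simp add: real_choose2 of_nat_diff field_simps)
  finally show ?case using Suc fin less_Suc_eq by auto
qed

lemma TT_val: "1 \<le> i \<Longrightarrow> i \<le> m - 1 \<Longrightarrow> TT i = real (kk i choose 2)"
  using TT_all by blast

lemma rh_fin: "1 \<le> i \<Longrightarrow> i \<le> m - 2 \<Longrightarrow> rh i = ereal (rr i)"
proof -
  assume i: "1 \<le> i" "i \<le> m - 2"
  have "\<exists>\<rho>. rh i = ereal \<rho>" using TT_all[of "Suc i"] i by auto
  then show ?thesis unfolding rr_def by auto
qed

lemma rr_nn: "1 \<le> i \<Longrightarrow> i \<le> m - 2 \<Longrightarrow> rr i \<ge> 0"
proof -
  assume i: "1 \<le> i" "i \<le> m - 2"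
  show "rr i \<ge> 0" by (rule pay_fin(1)[OF i rh_fin[OF i]])
qed

lemma rr_P: "1 \<le> i \<Longrightarrow> i \<le> m - 3 \<Longrightarrow> rr i \<le> 1 / (real (kk i) - 1)"
proof -
  assume i: "1 \<le> i" "i \<le> m - 3"
  have i2: "i \<le> m - 2" "i \<le> m - 1" using i by auto
  have T: "TT i = real (kk i choose 2)" by (rule TT_val[OF i(1) i2(2)])
  have "rh i \<le> ereal (1 / (real (kk i) - 1))" by (rule claimP[OF i T])
  then show ?thesis using rh_fin[OF i(1) i2(1)] by simp
qed

end


context rctx
begin

abbreviation "LL \<equiv> card C div 4"

lemma sg_bnd: "r \<in> Rk \<Longrightarrow> 0 \<le> sg r \<and> sg r \<le> 1"
  using Ssub Rr unfolding sg_def by (auto simp: divide_le_eq_1)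

lemma sgR: "r \<in> Rk \<Longrightarrow> sg r * R r = S r"
  using Ssub unfolding sg_def by (cases "R r = 0") auto

lemma sgb1: "r \<in> Rk \<Longrightarrow> sg r * b 1 r = S r * MM"
  using sgR unfolding b1 by (metis mult.assoc)

lemma BB_step: "1 \<le> i \<Longrightarrow> i \<le> m - 2 \<Longrightarrow> BB (Suc i) = BB i - PP i"
  unfolding BB_def PP_def using b_step by (simp add: sum_subtractf[symmetric] right_diff_distrib)

lemma PP_nn: "1 \<le> i \<Longrightarrow> i \<le> m - 2 \<Longrightarrow> PP i \<ge> 0"
  unfolding PP_def using pay_bnd sg_bnd by (intro sum_nonneg) auto

lemma BB_nn: "1 \<le> i \<Longrightarrow> i \<le> m - 1 \<Longrightarrow> BB i \<ge> 0"
  unfolding BB_def using b_bnd sg_bnd by (intro sum_nonneg) auto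

lemma BB_le_TT: "1 \<le> i \<Longrightarrow> i \<le> m - 1 \<Longrightarrow> BB i \<le> TT i"
  unfolding BB_def TT_def using b_bnd sg_bnd
  by (intro sum_mono) (auto simp: mult_left_le_one_le)

lemma UU_nn: "UU i \<ge> 0"
  unfolding UU_def uu_def using Ssub by (intro sum_nonneg) auto

lemma PP_le: "1 \<le> i \<Longrightarrow> i \<le> m - 2 \<Longrightarrow> PP i \<le> rr i * MM * UU i"
proof -
  assume i: "1 \<le> i" "i \<le> m - 2"
  have f: "\<forall>r\<in>Rk. pay i r \<le> rr i * b 1 r * uu i r" using pay_fin(2)[OF i rh_fin[OF i]] .
  have "PP i \<le> (\<Sum>r\<in>Rk. sg r * (rr i * b 1 r * uu i r))"
    unfolding PP_def using f sg_bnd by (intro sum_mono mult_left_mono) auto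
  also have "\<dots> = (\<Sum>r\<in>Rk. rr i * MM * (S r * uu i r))"
  proof (rule sum.cong[OF refl])
    fix r assume r: "r \<in> Rk"
    have "sg r * (rr i * b 1 r * uu i r) = rr i * (sg r * b 1 r) * uu i r" by (simp add: algebra_simps)
    also have "\<dots> = rr i * (S r * MM) * uu i r" using sgb1[OF r] by simp
    also have "\<dots> = rr i * MM * (S r * uu i r)" by (simp add: algebra_simps)
    finally show "sg r * (rr i * b 1 r * uu i r) = rr i * MM * (S r * uu i r)" .
  qed
  also have "\<dots> = rr i * MM * UU i" unfolding UU_def by (simp add: sum_distrib_left)
  finally show ?thesis .
qed

lemma rate:
  assumes i: "1 \<le> i" "i \<le> m - 3"
  shows "rr i * BB i \<le> 2"
proof (rule ccontr)
  assume "\<not> rr i * BB i \<le> 2"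
  then have gt: "rr i * BB i > 2" by simp
  have i2: "i \<le> m - 2" "i \<le> m - 1" using i by auto
  have rn: "rr i \<ge> 0" using rr_nn[OF i(1) i2(1)] .
  have Bn: "BB i \<ge> 0" using BB_nn[OF i(1) i2(2)] .
  have Bp: "BB i > 0"
  proof (rule ccontr)
    assume "\<not> BB i > 0"
    then have "BB i = 0" using Bn by simp
    then show False using gt by simp
  qed
  define k1 where "k1 = real (kk i) - 1"
  have k1p: "k1 \<ge> 3" unfolding k1_def kk_def using i m4 by simp
  define \<rho>' where "\<rho>' = 2 / BB i"
  have rl: "\<rho>' < rr i" unfolding \<rho>'_def using gt Bp by (simp add: divide_less_eq mult.commute)
  have rP: "rr i \<le> 1 / k1" unfolding k1_def using rr_P[OF i] .
  have Bbig: "BB i > 2 * k1"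
  proof -
    have "2 / BB i < 1 / k1" using rl rP unfolding \<rho>'_def by linarith
    then show ?thesis using Bp k1p by (simp add: field_simps)
  qed
  have "(\<Sum>r\<in>Rk. sg r * min (\<rho>' * b 1 r * k1) (b i r)) < 2 * k1"
    unfolding k1_def by (rule avg_round[OF i(1) i2(1)]) (use sg_bnd rh_fin[OF i(1) i2(1)] rl Bp \<rho>'_def in auto)
  moreover have "(\<Sum>r\<in>Rk. sg r * min (\<rho>' * b 1 r * k1) (b i r)) \<ge> (\<Sum>r\<in>Rk. (2 * k1 / BB i) * (sg r * b i r))"
  proof (rule sum_mono)
    fix r assume r: "r \<in> Rk"
    have bb: "0 \<le> b i r" "b i r \<le> b 1 r" using b_bnd[of i] i2 i r by auto
    have c1: "2 * k1 / BB i \<le> 1" using Bbig Bp by simp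
    have c0: "0 \<le> 2 * k1 / BB i" using Bp k1p by simp
    have "(2 * k1 / BB i) * b i r \<le> \<rho>' * b 1 r * k1"
    proof -
      have "(2 * k1 / BB i) * b i r \<le> (2 * k1 / BB i) * b 1 r" using bb c0 by (intro mult_left_mono) auto
      also have "\<dots> = \<rho>' * b 1 r * k1" unfolding \<rho>'_def by simp
      finally show ?thesis .
    qed
    moreover have "(2 * k1 / BB i) * b i r \<le> b i r" by (rule mult_left_le_one_le) (use c0 c1 bb in auto)
    ultimately have "(2 * k1 / BB i) * b i r \<le> min (\<rho>' * b 1 r * k1) (b i r)" by simp
    then have "sg r * ((2 * k1 / BB i) * b i r) \<le> sg r * min (\<rho>' * b 1 r * k1) (b i r)"
      using sg_bnd[OF r] by (intro mult_left_mono) auto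
    then show "(2 * k1 / BB i) * (sg r * b i r) \<le> sg r * min (\<rho>' * b 1 r * k1) (b i r)"
      by (simp add: algebra_simps)
  qed
  moreover have "(\<Sum>r\<in>Rk. (2 * k1 / BB i) * (sg r * b i r)) = 2 * k1"
  proof -
    have "(\<Sum>r\<in>Rk. (2 * k1 / BB i) * (sg r * b i r)) = (2 * k1 / BB i) * BB i"
      unfolding BB_def by (rule sum_distrib_left[symmetric])
    then show ?thesis using Bp by simp
  qed
  ultimately show False by linarith
qed

lemma E2: "1 \<le> i \<Longrightarrow> i \<le> m - 3 \<Longrightarrow> PP i * BB i \<le> 2 * MM * UU i"
proof -
  assume i: "1 \<le> i" "i \<le> m - 3"
  have i2: "i \<le> m - 2" "i \<le> m - 1" using i by auto
  have "PP i * BB i \<le> rr i * MM * UU i * BB i"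
    using PP_le[OF i(1) i2(1)] BB_nn[OF i(1) i2(2)] by (intro mult_right_mono) auto
  also have "\<dots> = (rr i * BB i) * (MM * UU i)" by (simp add: algebra_simps)
  also have "\<dots> \<le> 2 * (MM * UU i)"
    using rate[OF i] UU_nn[of i] MM_pos by (intro mult_right_mono) auto
  finally show ?thesis by simp
qed

lemma LL_le: "LL \<le> m - 3" using m4 by simp
lemma LL_ge: "LL \<ge> 1" using m4 by simp

lemma early_rho:
  assumes i: "1 \<le> i" "i \<le> LL"
    and lb: "\<forall>r\<in>Rk. b i r \<ge> R r * (2 * real (kk i choose 2) - MM)"
  shows "rr i \<le> 2 / MM"
proof (rule ccontr)
  assume "\<not> rr i \<le> 2 / MM"
  then have gt: "2 / MM < rr i" by simp
  have i2: "i \<le> m - 2" "i \<le> m - 1" using i LL_le by auto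
  define k1 where "k1 = real (kk i) - 1"
  have k1e: "k1 = real m - real i" unfolding k1_def using kk_real[OF i(1)] i2 by simp
  have kge: "k1 \<ge> real (m - LL)" unfolding k1e using i m4 by (simp add: of_nat_diff)
  have mL: "real (m - LL) \<ge> 3" using m4 by (simp add: of_nat_diff)
  have key: "k1 * (k1 - 1) \<ge> MM"
  proof -
    have "k1 * (k1 - 1) \<ge> real (m - LL) * (real (m - LL) - 1)"
      using kge mL by (intro mult_mono) auto
    moreover have "real (m - LL) * (real (m - LL) - 1) \<ge> MM"
      using xi_ineq[OF m4] by (simp add: real_choose2)
    ultimately show ?thesis by linarith
  qed
  have ch: "2 * real (kk i choose 2) = (k1 + 1) * k1" unfolding k1_def by (simp add: real_choose2)
  have "(\<Sum>r\<in>Rk. 1 * min (2 / MM * b 1 r * k1) (b i r)) < 2 * k1"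
    unfolding k1_def by (rule avg_round[OF i(1) i2(1)]) (use gt rh_fin[OF i(1) i2(1)] MM_pos in auto)
  moreover have "(\<Sum>r\<in>Rk. 1 * min (2 / MM * b 1 r * k1) (b i r)) \<ge> (\<Sum>r\<in>Rk. 2 * k1 * R r)"
  proof (rule sum_mono)
    fix r assume r: "r \<in> Rk"
    have e: "2 / MM * b 1 r * k1 = 2 * k1 * R r" unfolding b1 using MM_pos by simp
    have "b i r \<ge> R r * (2 * real (kk i choose 2) - MM)" using lb r by auto
    moreover have "R r * (2 * real (kk i choose 2) - MM) \<ge> R r * (2 * k1)"
      using Rr r key ch by (intro mult_left_mono) (auto simp: algebra_simps)
    ultimately have "b i r \<ge> 2 * k1 * R r" by (simp add: algebra_simps)
    then show "2 * k1 * R r \<le> 1 * min (2 / MM * b 1 r * k1) (b i r)" using e by simp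
  qed
  moreover have "(\<Sum>r\<in>Rk. 2 * k1 * R r) = 2 * k1" using Rs by (simp add: sum_distrib_left[symmetric])
  ultimately show False by linarith
qed

lemma uu_le: "1 \<le> i \<Longrightarrow> i \<le> m - 2 \<Longrightarrow> uu i r \<le> real (kk i) - 1"
proof -
  assume i: "1 \<le> i" "i \<le> m - 2"
  have im: "i \<le> m" using i by simp
  have "uX r (xr i) (X i) \<le> card (X i) - 1" using uX_le[OF X_props(4,3)[OF i(1) im]] .
  then have "real (uX r (xr i) (X i)) \<le> real (kk i - 1)" using X_props(1)[OF i(1) im] by simp
  moreover have "real (kk i - 1) = real (kk i) - 1" using i unfolding kk_def by (simp add: of_nat_diff)
  ultimately show ?thesis unfolding uu_def by simp
qed

lemma early_all: "1 \<le> i \<Longrightarrow> i \<le> LL \<Longrightarrow> \<forall>r\<in>Rk. b i r \<ge> R r * (2 * real (kk i choose 2) - MM)"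
proof (induction i rule: nat_induct_at_least)
  case base
  show ?case
  proof
    fix r assume r: "r \<in> Rk"
    have "2 * real (kk 1 choose 2) - MM = MM" unfolding kk_def by simp
    then show "b 1 r \<ge> R r * (2 * real (kk 1 choose 2) - MM)" unfolding b1 by simp
  qed
next
  case (Suc i)
  have i: "1 \<le> i" "i \<le> LL" using Suc by auto
  have i2: "i \<le> m - 2" using i LL_le by simp
  have lb: "\<forall>r\<in>Rk. b i r \<ge> R r * (2 * real (kk i choose 2) - MM)" using Suc by auto
  have rb: "rr i \<le> 2 / MM" using early_rho[OF i lb] .
  show ?case
  proof
    fix r assume r: "r \<in> Rk"
    have "pay i r \<le> rr i * b 1 r * uu i r" using pay_fin(2)[OF i(1) i2 rh_fin[OF i(1) i2]] r by auto
    also have "\<dots> \<le> (2 / MM) * b 1 r * (real (kk i) - 1)"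
      using rb uu_le[OF i(1) i2, of r] b1_nn[OF r] rr_nn[OF i(1) i2] pay_bnd[OF i(1) i2 r]
      by (intro mult_mono) (auto simp: uu_def)
    also have "\<dots> = 2 * R r * (real (kk i) - 1)" unfolding b1 using MM_pos by simp
    finally have pl: "pay i r \<le> 2 * R r * (real (kk i) - 1)" .
    have "b (Suc i) r = b i r - pay i r" using b_step[OF i(1) i2 r] .
    also have "\<dots> \<ge> R r * (2 * real (kk i choose 2) - MM) - 2 * R r * (real (kk i) - 1)"
      using lb r pl by auto
    also have "R r * (2 * real (kk i choose 2) - MM) - 2 * R r * (real (kk i) - 1)
        = R r * (2 * real (kk (Suc i) choose 2) - MM)"
    proof -
      have "kk i \<ge> 1" using i2 m4 unfolding kk_def by simp
      then have e: "real (kk (Suc i)) = real (kk i) - 1" unfolding kk_def using i2 by (simp add: of_nat_diff)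
      have c2: "2 * real (n choose 2) = real n * (real n - 1)" for n by (simp add: real_choose2)
      show ?thesis unfolding c2 e by (simp add: algebra_simps)
    qed
    finally show "b (Suc i) r \<ge> R r * (2 * real (kk (Suc i) choose 2) - MM)" .
  qed
qed

lemma E1: "1 \<le> i \<Longrightarrow> i \<le> LL \<Longrightarrow> PP i \<le> 2 * UU i"
proof -
  assume i: "1 \<le> i" "i \<le> LL"
  have i2: "i \<le> m - 2" using i LL_le by simp
  have rb: "rr i \<le> 2 / MM" using early_rho[OF i early_all[OF i]] .
  have "PP i \<le> rr i * MM * UU i" using PP_le[OF i(1) i2] .
  also have "\<dots> \<le> (2 / MM) * MM * UU i" using rb UU_nn[of i] MM_pos
    by (intro mult_right_mono) auto
  finally show ?thesis using MM_pos by simp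
qed

lemma E4: "n \<le> m - 2 \<Longrightarrow> (\<Sum>i\<in>{1..n}. PP i) = BB 1 - BB (Suc n)"
proof (induction n)
  case 0
  then show ?case by simp
next
  case (Suc n)
  then have "(\<Sum>i\<in>{1..Suc n}. PP i) = BB 1 - BB (Suc n) + PP (Suc n)" by simp
  also have "\<dots> = BB 1 - BB (Suc (Suc n))" using BB_step[of "Suc n"] Suc by simp
  finally show ?case .
qed

lemma E5: "LL \<le> n \<Longrightarrow> n \<le> m - 3 \<Longrightarrow> (\<Sum>i\<in>{Suc LL..n}. PP i * BB i) \<ge> (BB (Suc LL) ^ 2 - BB (Suc n) ^ 2) / 2"
proof (induction n rule: nat_induct_at_least)
  case base
  then show ?case by simp
next
  case (Suc n)
  have s: "{Suc LL..Suc n} = insert (Suc n) {Suc LL..n}" using Suc by auto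
  have e1: "(\<Sum>i\<in>{Suc LL..Suc n}. PP i * BB i) = (\<Sum>i\<in>{Suc LL..n}. PP i * BB i) + PP (Suc n) * BB (Suc n)"
    unfolding s by simp
  have e2: "BB (Suc (Suc n)) = BB (Suc n) - PP (Suc n)" using BB_step[of "Suc n"] Suc by simp
  have ih: "(\<Sum>i\<in>{Suc LL..n}. PP i * BB i) \<ge> (BB (Suc LL) ^ 2 - BB (Suc n) ^ 2) / 2" using Suc by simp
  have e3: "BB (Suc n) ^ 2 - BB (Suc (Suc n)) ^ 2 = 2 * (PP (Suc n) * BB (Suc n)) - PP (Suc n) ^ 2"
    unfolding e2 by (simp add: power2_eq_square algebra_simps)
  have q: "PP (Suc n) ^ 2 \<ge> 0" by simp
  have gen: "(a1 - a2) / 2 \<le> a4 \<Longrightarrow> a2 - a3 = 2 * a5 - a6 \<Longrightarrow> 0 \<le> a6 \<Longrightarrow> (a1 - a3) / 2 \<le> a4 + a5"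
    for a1 a2 a3 a4 a5 a6 :: real by argo
  have "(BB (Suc LL) ^ 2 - BB (Suc (Suc n)) ^ 2) / 2 \<le> (\<Sum>i\<in>{Suc LL..n}. PP i * BB i) + PP (Suc n) * BB (Suc n)"
    by (rule gen[OF ih e3 q])
  then show ?case unfolding e1 by simp
qed

end


lemma final_alg:
  fixes M s U z xi :: real
  assumes M: "M > 0" and s: "s > 0" and sM: "M * s \<le> M"
    and U: "U \<ge> (M * s - z) / 2 + (z ^ 2 - 1 / 4) / (4 * M)" and U0: "U \<ge> 0"
    and z0: "0 \<le> z" and zy: "z \<le> M * s" and zx: "z \<le> xi" and xiM: "xi + 1 / 4 \<le> M"
  shows "(M * s - 1 / 2 \<le> xi \<longrightarrow> (1 / s) * U \<ge> M * s / 4 - 1 / 8) \<and>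
         (M * s - 1 / 2 > xi \<longrightarrow>
            (1 / s) * U \<ge> 1 / 2 * M * (1 - xi / (M * s)) + (xi + 1) / 4 * (xi / (M * s)) - 1 / (4 * s))"
proof -
  define y where "y = M * s"
  have mono: "(y - a) / 2 + (a ^ 2 - 1 / 4) / (4 * M) \<ge> (y - c) / 2 + (c ^ 2 - 1 / 4) / (4 * M)"
    if "0 \<le> a" "a \<le> c" "c \<le> M" for a c
  proof -
    have e: "((y - a) / 2 + (a ^ 2 - 1 / 4) / (4 * M)) - ((y - c) / 2 + (c ^ 2 - 1 / 4) / (4 * M))
        = (c - a) * (2 * M - c - a) / (4 * M)"
      using M by (simp add: field_simps power2_eq_square)
    have "(c - a) * (2 * M - c - a) \<ge> 0" using that by (intro mult_nonneg_nonneg) auto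
    then have "(c - a) * (2 * M - c - a) / (4 * M) \<ge> 0" using M by simp
    then show ?thesis using e by linarith
  qed
  have U': "U \<ge> (y - z) / 2 + (z ^ 2 - 1 / 4) / (4 * M)" using U unfolding y_def .
  have part1: "(1 / s) * U \<ge> M * s / 4 - 1 / 8"
  proof (cases "y \<ge> 1 / 2")
    case True
    have "U \<ge> (y - y) / 2 + (y ^ 2 - 1 / 4) / (4 * M)"
      using mono[of z y] z0 zy sM U' unfolding y_def by linarith
    then have u1: "U \<ge> (y ^ 2 - 1 / 4) / (4 * M)" by simp
    have "(y ^ 2 - 1 / 4) / (4 * M) \<ge> (y ^ 2 - y / 2) / (4 * M)"
      using True M by (intro divide_right_mono) auto
    then have u2: "U \<ge> (y ^ 2 - y / 2) / (4 * M)" using u1 by linarith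
    have "(1 / s) * U \<ge> (1 / s) * ((y ^ 2 - y / 2) / (4 * M))"
      using u2 s by (intro mult_left_mono) auto
    moreover have "(1 / s) * ((y ^ 2 - y / 2) / (4 * M)) = M * s / 4 - 1 / 8"
      unfolding y_def using s M by (simp add: field_simps power2_eq_square)
    ultimately show ?thesis by simp
  next
    case False
    then have "M * s / 4 - 1 / 8 < 0" unfolding y_def by simp
    moreover have "(1 / s) * U \<ge> 0" using s U0 by simp
    ultimately show ?thesis by linarith
  qed
  have part2: "(1 / s) * U \<ge> 1 / 2 * M * (1 - xi / (M * s)) + (xi + 1) / 4 * (xi / (M * s)) - 1 / (4 * s)"
    if gt: "M * s - 1 / 2 > xi"
  proof -
    have xy: "xi \<le> M" using xiM by simp
    have "U \<ge> (y - xi) / 2 + (xi ^ 2 - 1 / 4) / (4 * M)"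
      using mono[of z xi] z0 zx xy U' by linarith
    moreover have "(xi ^ 2 - 1 / 4) / (4 * M) \<ge> (xi ^ 2 + xi - M) / (4 * M)"
      using xiM M by (intro divide_right_mono) auto
    moreover have "(xi ^ 2 + xi - M) / (4 * M) = (xi + 1) * xi / (4 * M) - 1 / 4"
      using M by (simp add: field_simps power2_eq_square)
    ultimately have u: "U \<ge> (y - xi) / 2 + (xi + 1) * xi / (4 * M) - 1 / 4" by linarith
    have "(1 / s) * U \<ge> (1 / s) * ((y - xi) / 2 + (xi + 1) * xi / (4 * M) - 1 / 4)"
      using u s by (intro mult_left_mono) auto
    moreover have "(1 / s) * ((y - xi) / 2 + (xi + 1) * xi / (4 * M) - 1 / 4)
        = 1 / 2 * M * (1 - xi / (M * s)) + (xi + 1) / 4 * (xi / (M * s)) - 1 / (4 * s)"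
      unfolding y_def using s M by (simp add: field_simps)
    ultimately show ?thesis by simp
  qed
  show ?thesis using part1 part2 by blast
qed

context rctx
begin

definition Upair where
  "Upair = (\<Sum>r\<in>Rk. S r * (if prefers r (rhd ! (m - 2)) (rhd ! (m - 1)) then 1 else 0))"

lemma E3: "4 * MM * (UU (m - 2) + Upair) \<ge> BB (m - 2) ^ 2 - 1 / 4"
proof -
  define i0 where "i0 = m - 2"
  have i0: "1 \<le> i0" "i0 \<le> m - 2" "i0 \<le> m - 1" "Suc i0 = m - 1" unfolding i0_def using m4 by auto
  define p where "p = rhd ! (m - 2)"
  define q where "q = rhd ! (m - 1)"
  have pqC: "p \<in> C" "q \<in> C" "p \<noteq> q" unfolding p_def q_def using rhd_props m4
    by (auto simp: nth_eq_iff_index_eq)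
  define good where "good r = (uu i0 r \<ge> 1 \<or> prefers r p q)" for r
  define ind where "ind r = (if prefers r p q then 1 else 0 :: real)" for r
  have uu0: "0 \<le> uu i r" for i r unfolding uu_def by simp
  have stepA: "S r * uu i0 r + S r * ind r \<ge> (if good r then sg r * b i0 r / MM else 0)" if r: "r \<in> Rk" for r
  proof (cases "good r")
    case True
    have Sn: "0 \<le> S r" using Ssub r by auto
    have "uu i0 r + ind r \<ge> 1" using True uu0[of i0 r] unfolding good_def ind_def by auto
    then have "S r * (uu i0 r + ind r) \<ge> S r * 1" using Sn by (intro mult_left_mono) auto
    then have h1: "S r * uu i0 r + S r * ind r \<ge> S r" by (simp add: algebra_simps)
    have "sg r * b i0 r \<le> sg r * b 1 r" using b_bnd[OF i0(1) i0(3)] sg_bnd[OF r] r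
      by (intro mult_left_mono) auto
    then have "sg r * b i0 r \<le> S r * MM" using sgb1[OF r] by simp
    then have "sg r * b i0 r / MM \<le> S r" using MM_pos by (simp add: divide_le_eq)
    then show ?thesis using True h1 by simp
  next
    case False
    have "0 \<le> S r * uu i0 r + S r * ind r" using Ssub r uu0[of i0 r] unfolding ind_def by simp
    then show ?thesis using False by simp
  qed
  have sumA: "UU i0 + Upair \<ge> (\<Sum>r\<in>Rk. if good r then sg r * b i0 r / MM else 0)"
  proof -
    have "UU i0 + Upair = (\<Sum>r\<in>Rk. S r * uu i0 r + S r * ind r)"
      unfolding UU_def Upair_def ind_def p_def q_def by (simp add: sum.distrib)
    then show ?thesis using stepA by (simp add: sum_mono)
  qed
  have split: "BB i0 = (\<Sum>r\<in>Rk. if good r then sg r * b i0 r else 0) + (\<Sum>r\<in>Rk. if good r then 0 else sg r * b i0 r)"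
    unfolding BB_def by (simp add: sum.distrib[symmetric] if_distrib) (intro sum.cong refl, simp)
  have goodsum: "(\<Sum>r\<in>Rk. if good r then sg r * b i0 r / MM else 0) = (\<Sum>r\<in>Rk. if good r then sg r * b i0 r else 0) / MM"
    unfolding sum_divide_distrib by (intro sum.cong refl) simp
  have tot: "(\<Sum>r\<in>Rk. if prefers r p q then b (m - 1) r else 0) + (\<Sum>r\<in>Rk. if prefers r q p then b (m - 1) r else 0) = 1"
  proof -
    have "TT (m - 1) = real (kk (m - 1) choose 2)" by (rule TT_val) (use m4 in auto)
    moreover have "kk (m - 1) = 2" unfolding kk_def using m4 by simp
    ultimately have T1: "TT (m - 1) = 1" by simp
    have "(\<Sum>r\<in>Rk. if prefers r p q then b (m - 1) r else 0) + (\<Sum>r\<in>Rk. if prefers r q p then b (m - 1) r else 0)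
        = (\<Sum>r\<in>Rk. b (m - 1) r)"
      unfolding sum.distrib[symmetric]
    proof (rule sum.cong[OF refl])
      fix r assume r: "r \<in> Rk"
      have dr: "distinct r" "set r = C" using r by (auto simp: rankings_def)
      have "pos r p \<noteq> pos r q" using pos_in[OF dr(1)] dr pqC by metis
      then have "prefers r p q \<noteq> prefers r q p" using dr pqC by (auto simp: prefers_pos[OF dr(1)])
      then show "(if prefers r p q then b (m - 1) r else 0) + (if prefers r q p then b (m - 1) r else 0) = b (m - 1) r"
        by auto
    qed
    then show ?thesis using T1 unfolding TT_def by simp
  qed
  have fin: "(\<Sum>r\<in>Rk. if prefers r p q then b (m - 1) r else 0) \<ge> (\<Sum>r\<in>Rk. if prefers r q p then b (m - 1) r else 0)"
  proof -
    have "(\<Sum>r\<in>{r\<in>Rk. prefers r p q}. b (m - 1) r) \<ge> (\<Sum>r\<in>{r\<in>Rk. prefers r q p}. b (m - 1) r)"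
      using final unfolding p_def q_def Let_def by simp
    then show ?thesis unfolding sum.inter_filter[OF finR] .
  qed
  have badsum: "(\<Sum>r\<in>Rk. if good r then 0 else sg r * b i0 r) \<le> (\<Sum>r\<in>Rk. if prefers r q p then b (m - 1) r else 0)"
  proof (rule sum_mono)
    fix r assume r: "r \<in> Rk"
    have bn: "0 \<le> b (m - 1) r" using b_bnd[of "m - 1"] m4 r by auto
    show "(if good r then 0 else sg r * b i0 r) \<le> (if prefers r q p then b (m - 1) r else 0)"
    proof (cases "good r")
      case True
      then show ?thesis using bn by simp
    next
      case False
      then have u: "uu i0 r < 1" "\<not> prefers r p q" unfolding good_def by auto
      then have "uu i0 r = 0" unfolding uu_def by simp
      then have "pay i0 r = 0" using pay_bnd[OF i0(1) i0(2) r] by simp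
      then have beq: "b (m - 1) r = b i0 r" using b_step[OF i0(1) i0(2) r] i0(4) by simp
      have dr: "distinct r" "set r = C" using r by (auto simp: rankings_def)
      have "pos r p \<noteq> pos r q" using pos_in[OF dr(1)] dr pqC by metis
      then have qp: "prefers r q p" using u(2) dr pqC by (auto simp: prefers_pos[OF dr(1)])
      have "sg r * b i0 r \<le> b i0 r" using sg_bnd[OF r] b_bnd[OF i0(1) i0(3)] r
        by (intro mult_left_le_one_le) auto
      then show ?thesis using False qp beq by simp
    qed
  qed
  have half: "(\<Sum>r\<in>Rk. if prefers r q p then b (m - 1) r else 0) \<le> 1 / 2" using tot fin by linarith
  define w where "w = BB i0"
  have w03: "0 \<le> w" "w \<le> 3"
  proof -
    show "0 \<le> w" unfolding w_def by (rule BB_nn[OF i0(1) i0(3)])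
    have "TT i0 = real (kk i0 choose 2)" by (rule TT_val[OF i0(1) i0(3)])
    moreover have "kk i0 = 3" unfolding kk_def i0_def using m4 by simp
    ultimately have "TT i0 = 3" by (simp add: real_choose2)
    then show "w \<le> 3" unfolding w_def using BB_le_TT[OF i0(1) i0(3)] by simp
  qed
  have Elow: "UU i0 + Upair \<ge> (w - 1 / 2) / MM"
  proof -
    have "(\<Sum>r\<in>Rk. if good r then sg r * b i0 r else 0) \<ge> w - 1 / 2"
      using split badsum half unfolding w_def by linarith
    then have "(\<Sum>r\<in>Rk. if good r then sg r * b i0 r else 0) / MM \<ge> (w - 1 / 2) / MM"
      using MM_pos by (intro divide_right_mono) auto
    then show ?thesis using sumA goodsum by linarith
  qed
  have E0: "UU i0 + Upair \<ge> 0"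
  proof -
    have "Upair \<ge> 0" unfolding Upair_def using Ssub by (intro sum_nonneg) auto
    then show ?thesis using UU_nn[of i0] by simp
  qed
  show ?thesis
  proof (cases "w \<le> 1 / 2")
    case True
    have "w ^ 2 \<le> (1 / 2) ^ 2" using True w03 by (intro power_mono) auto
    then have "w ^ 2 - 1 / 4 \<le> 0" by (simp add: power2_eq_square)
    moreover have "4 * MM * (UU i0 + Upair) \<ge> 0" using E0 MM_pos by simp
    ultimately show ?thesis unfolding w_def i0_def by linarith
  next
    case False
    have "4 * MM * (UU i0 + Upair) \<ge> 4 * MM * ((w - 1 / 2) / MM)"
      using Elow MM_pos by (intro mult_left_mono) auto
    also have "4 * MM * ((w - 1 / 2) / MM) = 4 * w - 2" using MM_pos by (simp add: field_simps)
    finally have h: "4 * MM * (UU i0 + Upair) \<ge> 4 * w - 2" .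
    have "(w - 1 / 2) * (7 / 2 - w) \<ge> 0" using False w03 by (intro mult_nonneg_nonneg) auto
    moreover have "(w - 1 / 2) * (7 / 2 - w) = 4 * w - 2 - (w ^ 2 - 1 / 4)" by (simp add: power2_eq_square field_simps)
    ultimately show ?thesis using h unfolding w_def i0_def by linarith
  qed
qed

end


context rctx
begin

lemma Utot_decomp: "(\<Sum>r\<in>Rk. S r * real (agree C r rhd)) = (\<Sum>i\<in>{1..m - 2}. UU i) + Upair"
proof -
  define ind where "ind r = (if prefers r (rhd ! (m - 2)) (rhd ! (m - 1)) then 1 else 0 :: real)" for r
  have ag: "real (agree C r rhd) = (\<Sum>i\<in>{1..m - 2}. uu i r) + ind r" if r: "r \<in> Rk" for r
    using agree_decomp[OF r rhdR finC] m4 unfolding uu_def xr_def X_def ind_def by simp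
  have "(\<Sum>r\<in>Rk. S r * real (agree C r rhd)) = (\<Sum>r\<in>Rk. (\<Sum>i\<in>{1..m - 2}. S r * uu i r) + S r * ind r)"
    by (intro sum.cong refl) (simp add: ag sum_distrib_left algebra_simps)
  also have "\<dots> = (\<Sum>r\<in>Rk. \<Sum>i\<in>{1..m - 2}. S r * uu i r) + (\<Sum>r\<in>Rk. S r * ind r)"
    by (rule sum.distrib)
  also have "(\<Sum>r\<in>Rk. \<Sum>i\<in>{1..m - 2}. S r * uu i r) = (\<Sum>i\<in>{1..m - 2}. UU i)"
    unfolding UU_def by (rule sum.swap)
  also have "(\<Sum>r\<in>Rk. S r * ind r) = Upair" unfolding Upair_def ind_def ..
  finally show ?thesis .
qed

lemma main_ineq:
  "(\<Sum>r\<in>Rk. S r * real (agree C r rhd)) \<ge> (BB 1 - BB (Suc LL)) / 2 + (BB (Suc LL) ^ 2 - 1 / 4) / (4 * MM)"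
proof -
  have LLb: "1 \<le> LL" "LL \<le> m - 3" using LL_ge LL_le by auto
  have iv: "{1..m - 2} = {1..LL} \<union> {Suc LL..m - 3} \<union> {m - 2}" using LLb m4 by auto
  have sp: "(\<Sum>i\<in>{1..m - 2}. UU i) = (\<Sum>i\<in>{1..LL}. UU i) + (\<Sum>i\<in>{Suc LL..m - 3}. UU i) + UU (m - 2)"
  proof -
    have d1: "({1..LL} \<union> {Suc LL..m - 3}) \<inter> {m - 2} = {}" using m4 by auto
    have d2: "{1..LL} \<inter> {Suc LL..m - 3} = {}" by auto
    have "(\<Sum>i\<in>{1..m - 2}. UU i) = (\<Sum>i\<in>{1..LL} \<union> {Suc LL..m - 3}. UU i) + (\<Sum>i\<in>{m - 2}. UU i)"
      unfolding iv by (rule sum.union_disjoint) (use d1 in auto)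
    also have "(\<Sum>i\<in>{1..LL} \<union> {Suc LL..m - 3}. UU i) = (\<Sum>i\<in>{1..LL}. UU i) + (\<Sum>i\<in>{Suc LL..m - 3}. UU i)"
      by (rule sum.union_disjoint) (use d2 in auto)
    finally show ?thesis by simp
  qed
  have s1: "(\<Sum>i\<in>{1..LL}. UU i) \<ge> (BB 1 - BB (Suc LL)) / 2"
  proof -
    have "(\<Sum>i\<in>{1..LL}. UU i) \<ge> (\<Sum>i\<in>{1..LL}. PP i / 2)"
    proof (intro sum_mono)
      fix i assume i: "i \<in> {1..LL}"
      have "PP i \<le> 2 * UU i" by (rule E1) (use i in auto)
      then show "PP i / 2 \<le> UU i" by simp
    qed
    moreover have "(\<Sum>i\<in>{1..LL}. PP i / 2) = (\<Sum>i\<in>{1..LL}. PP i) / 2" by (simp add: sum_divide_distrib)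
    moreover have "(\<Sum>i\<in>{1..LL}. PP i) = BB 1 - BB (Suc LL)" by (rule E4) (use LLb in auto)
    ultimately show ?thesis by simp
  qed
  have s2: "(\<Sum>i\<in>{Suc LL..m - 3}. UU i) \<ge> (BB (Suc LL) ^ 2 - BB (m - 2) ^ 2) / (4 * MM)"
  proof -
    have "(\<Sum>i\<in>{Suc LL..m - 3}. UU i) \<ge> (\<Sum>i\<in>{Suc LL..m - 3}. PP i * BB i / (2 * MM))"
    proof (intro sum_mono)
      fix i assume i: "i \<in> {Suc LL..m - 3}"
      have "PP i * BB i \<le> 2 * MM * UU i" by (rule E2) (use i in auto)
      then show "PP i * BB i / (2 * MM) \<le> UU i" using MM_pos by (simp add: divide_le_eq algebra_simps)
    qed
    moreover have "(\<Sum>i\<in>{Suc LL..m - 3}. PP i * BB i / (2 * MM)) = (\<Sum>i\<in>{Suc LL..m - 3}. PP i * BB i) / (2 * MM)"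
      by (simp add: sum_divide_distrib)
    moreover have "(\<Sum>i\<in>{Suc LL..m - 3}. PP i * BB i) \<ge> (BB (Suc LL) ^ 2 - BB (Suc (m - 3)) ^ 2) / 2"
      by (rule E5) (use LLb in auto)
    moreover have "Suc (m - 3) = m - 2" using m4 by simp
    ultimately have "(\<Sum>i\<in>{Suc LL..m - 3}. UU i) \<ge> ((BB (Suc LL) ^ 2 - BB (m - 2) ^ 2) / 2) / (2 * MM)"
      using MM_pos by (smt (verit) divide_right_mono)
    then show ?thesis by simp
  qed
  have s3: "UU (m - 2) + Upair \<ge> (BB (m - 2) ^ 2 - 1 / 4) / (4 * MM)"
  proof -
    have "(BB (m - 2) ^ 2 - 1 / 4) / (4 * MM) \<le> (4 * MM * (UU (m - 2) + Upair)) / (4 * MM)"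
      by (rule divide_right_mono[OF E3]) (use MM_pos in simp)
    also have "\<dots> = UU (m - 2) + Upair" using MM_pos by simp
    finally show ?thesis .
  qed
  have comb: "(BB (Suc LL) ^ 2 - BB (m - 2) ^ 2) / (4 * MM) + (BB (m - 2) ^ 2 - 1 / 4) / (4 * MM)
      = (BB (Suc LL) ^ 2 - 1 / 4) / (4 * MM)"
    by (simp add: add_divide_distrib[symmetric])
  have "(\<Sum>r\<in>Rk. S r * real (agree C r rhd)) = (\<Sum>i\<in>{1..LL}. UU i) + (\<Sum>i\<in>{Suc LL..m - 3}. UU i) + (UU (m - 2) + Upair)"
    using Utot_decomp sp by simp
  then show ?thesis using s1 s2 s3 comb by linarith
qed

lemma concl:
  "let m = card C; M = real (m choose 2); s = (\<Sum>r\<in>rankings C. S r);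
       \<xi> = real ((m - m div 4) choose 2);
       W = (1 / s) * (\<Sum>r\<in>rankings C. S r * real (agree C r rhd)) in
     (M * s - 1/2 \<le> \<xi> \<longrightarrow> W \<ge> M * s / 4 - 1/8) \<and>
     (M * s - 1/2 > \<xi> \<longrightarrow>
        W \<ge> 1/2 * M * (1 - \<xi> / (M * s)) + (\<xi> + 1) / 4 * (\<xi> / (M * s)) - 1 / (4 * s))"
  if spos: "(\<Sum>r\<in>rankings C. S r) > 0"
proof -
  define s where "s = (\<Sum>r\<in>rankings C. S r)"
  define xi where "xi = real ((m - m div 4) choose 2)"
  define U where "U = (\<Sum>r\<in>rankings C. S r * real (agree C r rhd))"
  define z where "z = BB (Suc LL)"
  have LLb: "1 \<le> LL" "LL \<le> m - 3" using LL_ge LL_le by auto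
  have y: "BB 1 = MM * s"
  proof -
    have "BB 1 = (\<Sum>r\<in>Rk. S r * MM)" unfolding BB_def by (rule sum.cong[OF refl], erule sgb1)
    then show ?thesis unfolding s_def by (simp add: sum_distrib_right[symmetric] mult.commute)
  qed
  have s1: "s \<le> 1"
  proof -
    have "s \<le> (\<Sum>r\<in>Rk. R r)" unfolding s_def using Ssub by (intro sum_mono) auto
    then show ?thesis using Rs by simp
  qed
  have sM: "MM * s \<le> MM" using s1 MM_pos by simp
  have U: "U \<ge> (MM * s - z) / 2 + (z ^ 2 - 1 / 4) / (4 * MM)"
    using main_ineq y unfolding U_def z_def by simp
  have U0: "U \<ge> 0" unfolding U_def using Ssub by (intro sum_nonneg) auto
  have z0: "0 \<le> z" unfolding z_def by (rule BB_nn) (use LLb in auto)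
  have zy: "z \<le> MM * s"
  proof -
    have "(\<Sum>i\<in>{1..LL}. PP i) = BB 1 - BB (Suc LL)" by (rule E4) (use LLb in auto)
    moreover have "(\<Sum>i\<in>{1..LL}. PP i) \<ge> 0" by (intro sum_nonneg) (use PP_nn LLb in auto)
    ultimately show ?thesis using y unfolding z_def by linarith
  qed
  have zx: "z \<le> xi"
  proof -
    have "z \<le> TT (Suc LL)" unfolding z_def by (rule BB_le_TT) (use LLb in auto)
    moreover have "TT (Suc LL) = real (kk (Suc LL) choose 2)" by (rule TT_val) (use LLb in auto)
    moreover have "kk (Suc LL) = m - m div 4" unfolding kk_def by simp
    ultimately show ?thesis unfolding xi_def by simp
  qed
  have xiM: "xi + 1 / 4 \<le> MM"
  proof -
    define n where "n = real (m - m div 4)"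
    have n1: "n \<le> real m - 1" unfolding n_def using LLb m4 by (simp add: of_nat_diff)
    have n3: "n \<ge> 3" unfolding n_def using LLb m4 by (simp add: of_nat_diff)
    have "n * (n - 1) \<le> (real m - 1) * (real m - 2)" using n1 n3 by (intro mult_mono) auto
    moreover have "xi = n * (n - 1) / 2" unfolding xi_def n_def by (simp add: real_choose2)
    moreover have "MM = real m * (real m - 1) / 2" by (simp add: real_choose2)
    moreover have "real m * (real m - 1) - (real m - 1) * (real m - 2) = 2 * (real m - 1)"
      by (simp add: algebra_simps)
    moreover have "real m \<ge> 4" using m4 by simp
    ultimately show ?thesis by (simp add: field_simps)
  qed
  have "(MM * s - 1 / 2 \<le> xi \<longrightarrow> (1 / s) * U \<ge> MM * s / 4 - 1 / 8) \<and>
         (MM * s - 1 / 2 > xi \<longrightarrow>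
            (1 / s) * U \<ge> 1 / 2 * MM * (1 - xi / (MM * s)) + (xi + 1) / 4 * (xi / (MM * s)) - 1 / (4 * s))"
    by (rule final_alg[OF MM_pos _ sM U U0 z0 zy zx xiM]) (use spos s_def in simp)
  then show ?thesis unfolding Let_def s_def[symmetric] xi_def[symmetric] U_def[symmetric] by simp
qed

end

lemma ex_ctx:
  fixes C :: "'a set" and R S :: "'a list \<Rightarrow> real" and rhd :: "'a list"
  assumes finC: "finite C"
    and m4: "card C \<ge> 4"
    and R_range: "\<forall>r\<in>rankings C. 0 \<le> R r \<and> R r \<le> 1"
    and R_sum: "(\<Sum>r\<in>rankings C. R r) = 1"
    and out: "rmes_outcome C R rhd"
    and S_sub: "\<forall>r\<in>rankings C. 0 \<le> S r \<and> S r \<le> R r"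
  shows "\<exists>b. rctx C R S rhd b"
  using assms unfolding rmes_outcome_def rctx_def by blast

theorem mainTheorem8:
  fixes C :: "'a set" and R S :: "'a list \<Rightarrow> real" and rhd :: "'a list"
  assumes finC: "finite C"
    and m4: "card C \<ge> 4"
    and R_range: "\<forall>r\<in>rankings C. 0 \<le> R r \<and> R r \<le> 1"
    and R_sum: "(\<Sum>r\<in>rankings C. R r) = 1"
    and out: "rmes_outcome C R rhd"
    and S_sub: "\<forall>r\<in>rankings C. 0 \<le> S r \<and> S r \<le> R r"
    and S_pos: "(\<Sum>r\<in>rankings C. S r) > 0"
  shows "let m = card C; M = real (m choose 2); s = (\<Sum>r\<in>rankings C. S r);
             \<xi> = real ((m - m div 4) choose 2);
             W = (1 / s) * (\<Sum>r\<in>rankings C. S r * real (agree C r rhd)) in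
           (M * s - 1/2 \<le> \<xi> \<longrightarrow> W \<ge> M * s / 4 - 1/8) \<and>
           (M * s - 1/2 > \<xi> \<longrightarrow>
              W \<ge> 1/2 * M * (1 - \<xi> / (M * s)) + (\<xi> + 1) / 4 * (\<xi> / (M * s)) - 1 / (4 * s))"
proof -
  obtain b where ctx: "rctx C R S rhd b" using ex_ctx[OF finC m4 R_range R_sum out S_sub] by blast
  interpret rctx C R S rhd b by (rule ctx)
  show ?thesis by (rule concl[OF S_pos])
qed


end
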